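(* Let $X$ and $\Theta$ be compact metric spaces, let $\tau:\Theta\times X\to X$, $(\theta,x)\mapsto \tau_\theta(x)$, be continuous, and let $q=(q_x)_{x\in X}$ be a family of finite positive Borel measures on $\Theta$ such that $\sup_{x} q_x(\Theta)<\infty$, $\inf_{x} q_x(\Theta)>0$, $x\mapsto q_x(A)$ is Borel measurable for each Borel $A\subseteq\Theta$, and $x\mapsto q_x$ is weak-$*$ continuous. Let $B_q(f)(x)=\int_\Theta f(\tau_\theta(x))\,dq_x(\theta)$ on $C(X,\mathbb{R})$, and let $\mathcal{L}_q:\mathcal{M}_s(X)\to\mathcal{M}_s(X)$ be the Markov operator, i.e. the unique bounded linear operator with $\int_X f\,d[\mathcal{L}_q(\mu)]=\int_X B_q(f)\,d\mu$ for all $\mu\in\mathcal{M}_s(X)$ and $f\in C(X,\mathbb{R})$. Then there exists a number $\rho$ with $0<\rho\le \rho(B_q)$, where $\rho(B_q)$ is the spectral radius of $B_q$ on $C(X,\mathbb{R})$, such that the set \[ \{\nu\in\mathcal{M}_1(X):\ \mathcal{L}_q\nu=\rho\,\nu\} \] is nonempty.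
   Context: $\mathcal{M}_s(X)$ denotes the space of finite signed Borel measures on $X$ (the dual of $C(X,\mathbb{R})$ with sup norm), and $\mathcal{M}_1(X)$ the set of Borel probability measures on $X$ with the weak-$*$ topology. *)

theory Defs
  imports "HOL-Probability.Probability"
begin

definition Bq_fun :: "('x \<Rightarrow> 't measure) \<Rightarrow> ('t \<Rightarrow> 'x \<Rightarrow> 'x) \<Rightarrow> ('x \<Rightarrow> real) \<Rightarrow> 'x \<Rightarrow> real" where
  "Bq_fun q \<tau> f x = (\<integral>\<theta>. f (\<tau> \<theta> x) \<partial>(q x))"

text \<open>B_q as a bounded linear operator on C(X,R) (= bounded continuous functions, X compact).\<close>
definition Bq_op :: "('x::metric_space \<Rightarrow> 't measure) \<Rightarrow> ('t \<Rightarrow> 'x \<Rightarrow> 'x)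
    \<Rightarrow> ('x \<Rightarrow>\<^sub>C real) \<Rightarrow>\<^sub>L ('x \<Rightarrow>\<^sub>C real)" where
  "Bq_op q \<tau> = Blinfun (\<lambda>f. Bcontfun (Bq_fun q \<tau> (apply_bcontfun f)))"

definition blinfun_pow :: "('a::real_normed_vector \<Rightarrow>\<^sub>L 'a) \<Rightarrow> nat \<Rightarrow> ('a \<Rightarrow>\<^sub>L 'a)" where
  "blinfun_pow T n = ((\<lambda>S. T o\<^sub>L S) ^^ n) id_blinfun"

text \<open>Spectral radius via the Gelfand formula: inf over n>=1 of norm(T^n)^(1/n)
  (equal to lim norm(T^n)^(1/n)).\<close>
definition spectral_radius :: "('a::real_normed_vector \<Rightarrow>\<^sub>L 'a) \<Rightarrow> real" where
  "spectral_radius T = (INF n\<in>{1..}. norm (blinfun_pow T n) powr (1 / real n))"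

text \<open>Lq_image q tau nu mu: mu is the image L_q(nu) of nu under the Markov operator,
  i.e. the defining duality holds: integral f d mu = integral B_q f d nu for all f in C(X,R).\<close>
definition Lq_image :: "('x::metric_space \<Rightarrow> 't measure) \<Rightarrow> ('t \<Rightarrow> 'x \<Rightarrow> 'x) \<Rightarrow> 'x measure \<Rightarrow> 'x measure \<Rightarrow> bool" where
  "Lq_image q \<tau> \<nu> \<mu> \<longleftrightarrow> sets \<mu> = sets borel \<and>
     (\<forall>f::'x \<Rightarrow> real. continuous_on UNIV f \<longrightarrow> (\<integral>x. f x \<partial>\<mu>) = (\<integral>x. Bq_fun q \<tau> f x \<partial>\<nu>))"

end

theory Submission
  imports Defs
begin

definition Tm :: "'a set \<Rightarrow> ('a \<Rightarrow> 'a \<Rightarrow> real) \<Rightarrow> ('a \<Rightarrow> real) \<Rightarrow> 'a \<Rightarrow> real" where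
  "Tm F A v j = (\<Sum>i\<in>F. v i * A i j)"

definition nrm :: "'a set \<Rightarrow> ('a \<Rightarrow> real) \<Rightarrow> real" where
  "nrm F v = (\<Sum>j\<in>F. v j)"

lemma Tm_nonneg:
  assumes "\<And>i j. i \<in> F \<Longrightarrow> j \<in> F \<Longrightarrow> A i j \<ge> 0" "\<And>i. i \<in> F \<Longrightarrow> v i \<ge> 0" "j \<in> F"
  shows "Tm F A v j \<ge> 0"
  unfolding Tm_def using assms by (intro sum_nonneg) auto

lemma Tmpow_nonneg:
  assumes "\<And>i j. i \<in> F \<Longrightarrow> j \<in> F \<Longrightarrow> A i j \<ge> 0" "\<And>i. i \<in> F \<Longrightarrow> v i \<ge> 0" "j \<in> F"
  shows "(Tm F A ^^ n) v j \<ge> 0"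
  using assms(2,3)
proof (induction n arbitrary: j)
  case 0 then show ?case by simp
next
  case (Suc n) then show ?case by (simp add: Tm_nonneg assms(1))
qed

lemma nrm_Tm: "nrm F (Tm F A v) = (\<Sum>i\<in>F. v i * (\<Sum>j\<in>F. A i j))"
proof -
  have "nrm F (Tm F A v) = (\<Sum>j\<in>F. \<Sum>i\<in>F. v i * A i j)" unfolding nrm_def Tm_def by simp
  also have "\<dots> = (\<Sum>i\<in>F. \<Sum>j\<in>F. v i * A i j)" by (rule sum.swap)
  also have "\<dots> = (\<Sum>i\<in>F. v i * (\<Sum>j\<in>F. A i j))" by (simp add: sum_distrib_left)
  finally show ?thesis .
qed

lemma Tm_lin: "Tm F A (\<lambda>j. \<Sum>k\<in>S. a k * f k j) = (\<lambda>j. \<Sum>k\<in>S. a k * Tm F A (f k) j)"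
proof
  fix j
  have "Tm F A (\<lambda>j. \<Sum>k\<in>S. a k * f k j) j = (\<Sum>i\<in>F. \<Sum>k\<in>S. a k * f k i * A i j)"
    unfolding Tm_def by (simp add: sum_distrib_right)
  also have "\<dots> = (\<Sum>k\<in>S. \<Sum>i\<in>F. a k * (f k i * A i j))"
    by (subst sum.swap) (simp add: mult.assoc)
  also have "\<dots> = (\<Sum>k\<in>S. a k * Tm F A (f k) j)"
    unfolding Tm_def by (simp add: sum_distrib_left)
  finally show "Tm F A (\<lambda>j. \<Sum>k\<in>S. a k * f k j) j = (\<Sum>k\<in>S. a k * Tm F A (f k) j)" .
qed

lemma Tmpow_lin: "(Tm F A ^^ n) (\<lambda>j. \<Sum>k\<in>S. a k * f k j) = (\<lambda>j. \<Sum>k\<in>S. a k * (Tm F A ^^ n) (f k) j)"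
proof (induction n)
  case 0 then show ?case by simp
next
  case (Suc n)
  have "(Tm F A ^^ Suc n) (\<lambda>j. \<Sum>k\<in>S. a k * f k j) = Tm F A ((Tm F A ^^ n) (\<lambda>j. \<Sum>k\<in>S. a k * f k j))"
    by simp
  also have "\<dots> = Tm F A (\<lambda>j. \<Sum>k\<in>S. a k * (Tm F A ^^ n) (f k) j)" by (simp only: Suc)
  also have "\<dots> = (\<lambda>j. \<Sum>k\<in>S. a k * (Tm F A ^^ Suc n) (f k) j)" by (simp only: Tm_lin funpow.simps o_def)
  finally show ?case .
qed

lemma Tm_cong: "(\<And>j. j \<in> F \<Longrightarrow> v j = v' j) \<Longrightarrow> Tm F A v = Tm F A v'"
  unfolding Tm_def by (intro ext sum.cong) auto

lemma Tmpow_cong: assumes eq: "\<And>j. j \<in> F \<Longrightarrow> v j = v' j" and j: "j \<in> F"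
  shows "(Tm F A ^^ n) v j = (Tm F A ^^ n) v' j"
proof (cases n)
  case 0 then show ?thesis using eq j by simp
next
  case (Suc m)
  from eq have "Tm F A v = Tm F A v'" by (rule Tm_cong)
  then show ?thesis unfolding Suc funpow_Suc_right by simp
qed

definition evec :: "'a \<Rightarrow> 'a \<Rightarrow> real" where "evec i = (\<lambda>j. if j = i then 1 else 0)"

context
  fixes F :: "'a set" and A :: "'a \<Rightarrow> 'a \<Rightarrow> real" and c C :: real
  assumes fin: "finite F" and ne: "F \<noteq> {}"
    and Apos: "\<And>i j. i \<in> F \<Longrightarrow> j \<in> F \<Longrightarrow> A i j \<ge> 0"
    and rs_lo: "\<And>i. i \<in> F \<Longrightarrow> c \<le> (\<Sum>j\<in>F. A i j)"
    and rs_hi: "\<And>i. i \<in> F \<Longrightarrow> (\<Sum>j\<in>F. A i j) \<le> C"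
    and cpos: "c > 0"
begin

lemma Tpow_nn: "(\<And>i. i \<in> F \<Longrightarrow> v i \<ge> 0) \<Longrightarrow> j \<in> F \<Longrightarrow> (Tm F A ^^ n) v j \<ge> 0"
  by (rule Tmpow_nonneg[of F A]) (auto intro: Apos)

lemma nrm_T_lo: assumes "\<And>i. i \<in> F \<Longrightarrow> v i \<ge> 0" shows "c * nrm F v \<le> nrm F (Tm F A v)"
proof -
  have "c * nrm F v = (\<Sum>i\<in>F. v i * c)" unfolding nrm_def by (simp add: sum_distrib_left mult.commute)
  also have "\<dots> \<le> (\<Sum>i\<in>F. v i * (\<Sum>j\<in>F. A i j))"
    by (intro sum_mono mult_left_mono rs_lo assms)
  finally show ?thesis by (simp add: nrm_Tm)
qed

lemma nrm_T_hi: assumes "\<And>i. i \<in> F \<Longrightarrow> v i \<ge> 0" shows "nrm F (Tm F A v) \<le> C * nrm F v"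
proof -
  have "nrm F (Tm F A v) = (\<Sum>i\<in>F. v i * (\<Sum>j\<in>F. A i j))" by (simp add: nrm_Tm)
  also have "\<dots> \<le> (\<Sum>i\<in>F. v i * C)"
    by (intro sum_mono mult_left_mono rs_hi assms)
  also have "\<dots> = C * nrm F v" unfolding nrm_def by (simp add: sum_distrib_left mult.commute)
  finally show ?thesis .
qed

lemma Cpos: "C \<ge> c"
proof -
  obtain i where "i \<in> F" using ne by auto
  then show ?thesis using rs_lo rs_hi by force
qed

lemma nrm_nonneg: "(\<And>i. i \<in> F \<Longrightarrow> v i \<ge> 0) \<Longrightarrow> nrm F v \<ge> 0"
  unfolding nrm_def by (rule sum_nonneg)

lemma nrm_pow_lo: assumes "\<And>i. i \<in> F \<Longrightarrow> v i \<ge> 0" shows "c ^ n * nrm F v \<le> nrm F ((Tm F A ^^ n) v)"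
proof (induction n)
  case 0 then show ?case by simp
next
  case (Suc n)
  have "c ^ Suc n * nrm F v = c * (c ^ n * nrm F v)" by simp
  also have "\<dots> \<le> c * nrm F ((Tm F A ^^ n) v)" using Suc cpos by simp
  also have "\<dots> \<le> nrm F ((Tm F A ^^ Suc n) v)"
    by (simp, rule nrm_T_lo, rule Tmpow_nonneg[OF Apos assms])
  finally show ?case .
qed

lemma nrm_pow_hi: assumes "\<And>i. i \<in> F \<Longrightarrow> v i \<ge> 0" shows "nrm F ((Tm F A ^^ n) v) \<le> C ^ n * nrm F v"
proof (induction n)
  case 0 then show ?case by simp
next
  case (Suc n)
  have "nrm F ((Tm F A ^^ Suc n) v) \<le> C * nrm F ((Tm F A ^^ n) v)"
    by (simp, rule nrm_T_hi, rule Tmpow_nonneg[OF Apos assms])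
  also have "\<dots> \<le> C * (C ^ n * nrm F v)" using Suc Cpos cpos by (intro mult_left_mono) auto
  finally show ?case by simp
qed

lemma decomp: assumes "j \<in> F" shows "(Tm F A ^^ n) v j = (\<Sum>i\<in>F. v i * (Tm F A ^^ n) (evec i) j)"
proof -
  have "(Tm F A ^^ n) v j = (Tm F A ^^ n) (\<lambda>j. \<Sum>i\<in>F. v i * evec i j) j"
    by (rule Tmpow_cong[OF _ assms]) (simp add: evec_def fin if_distrib cong: if_cong)
  also have "\<dots> = (\<Sum>i\<in>F. v i * (Tm F A ^^ n) (evec i) j)" by (simp only: Tmpow_lin)
  finally show ?thesis .
qed

lemma nrm_decomp: "nrm F ((Tm F A ^^ n) v) = (\<Sum>i\<in>F. v i * nrm F ((Tm F A ^^ n) (evec i)))"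
proof -
  have "nrm F ((Tm F A ^^ n) v) = (\<Sum>j\<in>F. \<Sum>i\<in>F. v i * (Tm F A ^^ n) (evec i) j)"
    unfolding nrm_def by (intro sum.cong refl decomp)
  also have "\<dots> = (\<Sum>i\<in>F. \<Sum>j\<in>F. v i * (Tm F A ^^ n) (evec i) j)" by (rule sum.swap)
  also have "\<dots> = (\<Sum>i\<in>F. v i * nrm F ((Tm F A ^^ n) (evec i)))" unfolding nrm_def by (simp add: sum_distrib_left)
  finally show ?thesis .
qed

lemma evec_nonneg: "evec i j \<ge> 0" by (simp add: evec_def)

lemma nrm_evec: "i \<in> F \<Longrightarrow> nrm F (evec i) = 1"
  unfolding nrm_def evec_def using fin by simp

definition "Mx n = Max ((\<lambda>i. nrm F ((Tm F A ^^ n) (evec i))) ` F)"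

lemma Mx_ge: "i \<in> F \<Longrightarrow> nrm F ((Tm F A ^^ n) (evec i)) \<le> Mx n"
  unfolding Mx_def using fin by (intro Max_ge) auto

lemma Mx_attained: "\<exists>i\<in>F. Mx n = nrm F ((Tm F A ^^ n) (evec i))"
proof -
  have "Mx n \<in> (\<lambda>i. nrm F ((Tm F A ^^ n) (evec i))) ` F" unfolding Mx_def using fin ne by (intro Max_in) auto
  then show ?thesis by auto
qed

lemma Mx_lo: "c ^ n \<le> Mx n"
proof -
  obtain i where i: "i \<in> F" using ne by auto
  have "c ^ n = c ^ n * nrm F (evec i)" using nrm_evec[OF i] by simp
  also have "\<dots> \<le> nrm F ((Tm F A ^^ n) (evec i))" by (rule nrm_pow_lo) (simp add: evec_nonneg)
  also have "\<dots> \<le> Mx n" by (rule Mx_ge[OF i])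
  finally show ?thesis .
qed

lemma Mx_pos: "Mx n > 0" using Mx_lo[of n] cpos by (smt (verit) zero_less_power)

lemma Mx_0: "Mx 0 = 1"
  using Mx_attained[of 0] nrm_evec by auto

lemma nrm_le_Mx: assumes "\<And>i. i \<in> F \<Longrightarrow> v i \<ge> 0"
  shows "nrm F ((Tm F A ^^ n) v) \<le> Mx n * nrm F v"
proof -
  have "nrm F ((Tm F A ^^ n) v) = (\<Sum>i\<in>F. v i * nrm F ((Tm F A ^^ n) (evec i)))" by (rule nrm_decomp)
  also have "\<dots> \<le> (\<Sum>i\<in>F. v i * Mx n)" by (intro sum_mono mult_left_mono Mx_ge assms)
  also have "\<dots> = Mx n * nrm F v" unfolding nrm_def by (simp add: sum_distrib_right mult.commute)
  finally show ?thesis .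
qed

lemma Mx_submult: "Mx (n + m) \<le> Mx n * Mx m"
proof -
  obtain i where i: "i \<in> F" "Mx (n + m) = nrm F ((Tm F A ^^ (n + m)) (evec i))" using Mx_attained by blast
  have "nrm F ((Tm F A ^^ (n + m)) (evec i)) = nrm F ((Tm F A ^^ n) ((Tm F A ^^ m) (evec i)))"
    by (simp add: funpow_add)
  also have "\<dots> \<le> Mx n * nrm F ((Tm F A ^^ m) (evec i))"
    by (rule nrm_le_Mx) (rule Tmpow_nonneg[OF Apos], simp_all add: evec_nonneg)
  also have "\<dots> \<le> Mx n * Mx m" using Mx_pos[of n] Mx_ge[OF i(1)] by (intro mult_left_mono) auto
  finally show ?thesis using i by simp
qed

lemma Mx_pow: "Mx (k * m) \<le> Mx m ^ k"
proof (induction k)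
  case 0 then show ?case by (simp add: Mx_0)
next
  case (Suc k)
  have "Mx (Suc k * m) = Mx (m + k * m)" by (simp add: add.commute)
  also have "\<dots> \<le> Mx m * Mx (k * m)" by (rule Mx_submult)
  also have "\<dots> \<le> Mx m * Mx m ^ k" using Suc Mx_pos[of m] by (intro mult_left_mono) auto
  finally show ?case by simp
qed

definition "gg = (INF n\<in>{1..}. root n (Mx n))"

lemma root_Mx_lo: "n \<ge> 1 \<Longrightarrow> c \<le> root n (Mx n)"
proof -
  assume n: "n \<ge> 1"
  have "c = root n (c ^ n)" using n cpos by (simp add: real_root_power_cancel)
  also have "\<dots> \<le> root n (Mx n)" using n Mx_lo by (intro real_root_le_mono) auto
  finally show ?thesis .
qed

lemma bdd_roots: "bdd_below ((\<lambda>n. root n (Mx n)) ` {1..})"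
  using root_Mx_lo by (intro bdd_belowI[of _ c]) auto

lemma gg_lo: "c \<le> gg"
  unfolding gg_def by (rule cINF_greatest) (auto intro: root_Mx_lo)

lemma gg_le_root: "n \<ge> 1 \<Longrightarrow> gg \<le> root n (Mx n)"
  unfolding gg_def by (rule cINF_lower[OF bdd_roots]) auto

lemma gg_hi: "gg \<le> C"
proof -
  have "gg \<le> root 1 (Mx 1)" by (rule gg_le_root) simp
  also have "\<dots> = Mx 1" by simp
  also have "\<dots> \<le> C"
  proof -
    obtain i where i: "i \<in> F" "Mx 1 = nrm F ((Tm F A ^^ 1) (evec i))" using Mx_attained by blast
    have "nrm F ((Tm F A ^^ 1) (evec i)) \<le> C ^ 1 * nrm F (evec i)" by (rule nrm_pow_hi) (simp add: evec_nonneg)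
    then show ?thesis using i nrm_evec by simp
  qed
  finally show ?thesis .
qed

lemma gg_pos: "gg > 0" using gg_lo cpos by simp

lemma gg_pow_le: "gg ^ n \<le> Mx n"
proof (cases "n = 0")
  case True then show ?thesis by (simp add: Mx_0)
next
  case False
  then have n: "n \<ge> 1" by simp
  have "gg ^ n \<le> root n (Mx n) ^ n" using gg_le_root[OF n] gg_pos by (intro power_mono) auto
  also have "\<dots> = Mx n" using n Mx_pos[of n] by (simp add: real_root_pow_pos2 less_imp_le)
  finally show ?thesis .
qed

lemma gg_approx: assumes "q > 1" obtains m where "m \<ge> 1" "Mx m < (gg * q) ^ m"
proof -
  have "gg < gg * q" using assms gg_pos by simp
  then obtain m where m: "m \<in> {1..}" "root m (Mx m) < gg * q"
    unfolding gg_def using bdd_roots by (subst (asm) cINF_less_iff) auto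
  then have m1: "m \<ge> 1" by simp
  have "Mx m = root m (Mx m) ^ m" using m1 Mx_pos[of m] by (simp add: real_root_pow_pos2 less_imp_le)
  also have "\<dots> < (gg * q) ^ m" using m m1 Mx_pos[of m]
    by (intro power_strict_mono) (auto intro: less_imp_le)
  finally show ?thesis using m1 that by blast
qed

definition "aa n = nrm F ((Tm F A ^^ n) (\<lambda>j. 1))"
definition "bb n = aa n / gg ^ n"

lemma nrm_pow_evec_nonneg: "nrm F ((Tm F A ^^ n) (evec i)) \<ge> 0"
  by (intro nrm_nonneg Tmpow_nonneg[OF Apos]) (simp_all add: evec_nonneg)

lemma aa_eq: "aa n = (\<Sum>i\<in>F. nrm F ((Tm F A ^^ n) (evec i)))"
  unfolding aa_def by (subst nrm_decomp) simp

lemma aa_ge: "Mx n \<le> aa n"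
proof -
  obtain i where i: "i \<in> F" "Mx n = nrm F ((Tm F A ^^ n) (evec i))" using Mx_attained by blast
  show ?thesis unfolding aa_eq i(2) using fin i(1) nrm_pow_evec_nonneg
    by (intro member_le_sum) auto
qed

lemma aa_le: "aa n \<le> card F * Mx n"
proof -
  have "aa n \<le> (\<Sum>i\<in>F. Mx n)" unfolding aa_eq by (intro sum_mono Mx_ge)
  then show ?thesis by simp
qed

lemma bb_ge1: "bb n \<ge> 1"
  unfolding bb_def using gg_pow_le[of n] aa_ge[of n] gg_pos by (simp add: field_simps)

lemma bb_nonneg: "bb n \<ge> 0" using bb_ge1[of n] by simp

lemma S_ge: "(\<Sum>n<M. bb n) \<ge> M"
proof -
  have "(\<Sum>n<M. bb n) \<ge> (\<Sum>n<M. 1)" by (intro sum_mono bb_ge1)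
  then show ?thesis by simp
qed

lemma key_claim: assumes e: "e > 0" and M1: "M1 \<ge> 1"
  shows "\<exists>M\<ge>M1. bb M \<le> e * (\<Sum>n<M. bb n)"
proof (rule ccontr)
  assume "\<not> ?thesis"
  then have H: "\<And>M. M \<ge> M1 \<Longrightarrow> bb M > e * (\<Sum>n<M. bb n)" by force
  define S where "S M = (\<Sum>n<M. bb n)" for M
  have S1: "S M1 \<ge> 1" using S_ge[of M1] M1 unfolding S_def by simp
  have grow: "S (M1 + k) \<ge> (1 + e) ^ k * S M1" for k
  proof (induction k)
    case 0 then show ?case by simp
  next
    case (Suc k)
    have "S (M1 + Suc k) = S (M1 + k) + bb (M1 + k)" unfolding S_def by simp
    also have "\<dots> \<ge> S (M1 + k) + e * S (M1 + k)" using H[of "M1 + k"] unfolding S_def by simp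
    finally have "S (M1 + Suc k) \<ge> (1 + e) * S (M1 + k)" by (simp add: algebra_simps)
    moreover have "(1 + e) * S (M1 + k) \<ge> (1 + e) * ((1 + e) ^ k * S M1)"
      using Suc e by (intro mult_left_mono) auto
    ultimately show ?case by simp
  qed
  have blo: "bb (M1 + k) > e * (1 + e) ^ k" for k
  proof -
    have "e * (1 + e) ^ k \<le> e * ((1 + e) ^ k * S M1)" using S1 e
      by (intro mult_left_mono) (auto simp: mult_le_cancel_left1)
    also have "\<dots> \<le> e * S (M1 + k)" using grow[of k] e by (intro mult_left_mono) auto
    also have "\<dots> < bb (M1 + k)" using H[of "M1 + k"] unfolding S_def by simp
    finally show ?thesis .
  qed
  define q where "q = sqrt (1 + e)"
  have q1: "q > 1" unfolding q_def using e by simp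
  have q2: "q ^ 2 = 1 + e" unfolding q_def using e by simp
  obtain m where m: "m \<ge> 1" "Mx m < (gg * q) ^ m" using gg_approx[OF q1] by blast
  have bhi: "bb (j * m) \<le> card F * q ^ (j * m)" for j
  proof -
    have "Mx (j * m) \<le> Mx m ^ j" by (rule Mx_pow)
    also have "\<dots> \<le> ((gg * q) ^ m) ^ j" using m Mx_pos[of m] by (intro power_mono) auto
    also have "((gg * q) ^ m) ^ j = gg ^ (j * m) * q ^ (j * m)"
      by (metis power_mult power_mult_distrib mult.commute)
    finally have "Mx (j * m) \<le> gg ^ (j * m) * q ^ (j * m)" .
    then have "aa (j * m) \<le> card F * (gg ^ (j * m) * q ^ (j * m))"
      using aa_le[of "j * m"] by (smt (verit, best) mult_left_mono of_nat_0_le_iff)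
    then show ?thesis unfolding bb_def using gg_pos by (simp add: field_simps)
  qed
  define Bd where "Bd = card F * (1 + e) ^ M1 / e"
  obtain N where N: "Bd < q ^ N" using real_arch_pow[OF q1] by blast
  define j where "j = max N M1"
  have jm: "j * m \<ge> M1" "j * m \<ge> N" unfolding j_def using m
    by (metis le_trans max.cobounded1 max.cobounded2 mult.right_neutral mult_le_mono2)+
  define k where "k = j * m - M1"
  have jmk: "j * m = M1 + k" unfolding k_def using jm by simp
  have "e * (1 + e) ^ k < card F * q ^ (j * m)" using blo[of k] bhi[of j] jmk by simp
  moreover have "(1 + e) ^ k * (1 + e) ^ M1 = q ^ (j * m) * q ^ (j * m)"
    using jmk q2 by (simp add: power_add[symmetric] power_mult[symmetric] mult_2[symmetric] power2_eq_square)
        (metis power_add power_mult_distrib power2_eq_square power_mult mult.commute add.commute)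
  ultimately have "e * (q ^ (j * m) * q ^ (j * m)) < card F * q ^ (j * m) * (1 + e) ^ M1"
    using e by (smt (verit, ccfv_SIG) mult.assoc mult_strict_right_mono zero_less_power)
  then have "e * q ^ (j * m) < card F * (1 + e) ^ M1"
    using q1 by (smt (verit, best) mult.assoc mult.commute mult_less_cancel_left_pos zero_less_power)
  then have "q ^ (j * m) < Bd" unfolding Bd_def using e by (simp add: field_simps)
  moreover have "q ^ N \<le> q ^ (j * m)" using jm q1 by (intro power_increasing) auto
  ultimately show False using N by simp
qed

lemma approx_eigvec: assumes e: "e > 0"
  shows "\<exists>w lam. (\<forall>i\<in>F. 0 \<le> w i) \<and> (\<Sum>i\<in>F. w i) = 1 \<and> c \<le> lam \<and> lam \<le> C \<and>
     (\<Sum>j\<in>F. \<bar>(\<Sum>i\<in>F. w i * A i j) - lam * w j\<bar>) \<le> e"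
proof -
  have C0: "C > 0" using Cpos cpos by simp
  define e0 where "e0 = e / (2 * C)"
  have e0: "e0 > 0" unfolding e0_def using e C0 by simp
  define M1 where "M1 = max 1 (nat \<lceil>2 * C * card F / e\<rceil>)"
  have M1: "M1 \<ge> 1" unfolding M1_def by simp
  obtain M where M: "M \<ge> M1" "bb M \<le> e0 * (\<Sum>n<M. bb n)" using key_claim[OF e0 M1] by blast
  define S where "S = (\<Sum>n<M. bb n)"
  have SM: "S \<ge> M" unfolding S_def by (rule S_ge)
  have SM1: "S \<ge> 2 * C * card F / e"
  proof -
    have "2 * C * card F / e \<le> real (nat \<lceil>2 * C * card F / e\<rceil>)" by linarith
    also have "\<dots> \<le> M1" unfolding M1_def by simp
    finally show ?thesis using M(1) SM by linarith
  qed
  have S0: "S > 0" using SM M(1) M1 by simp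
  define u :: "'a \<Rightarrow> real" where "u = (\<lambda>j. 1)"
  define h where "h n j = (Tm F A ^^ n) u j / gg ^ n" for n j
  define w where "w j = (\<Sum>n<M. (1 / (gg ^ n * S)) * (Tm F A ^^ n) u j)" for j
  have unn: "\<And>i. i \<in> F \<Longrightarrow> u i \<ge> 0" unfolding u_def by simp
  have hnn: "j \<in> F \<Longrightarrow> h n j \<ge> 0" for n j
    unfolding h_def using Tpow_nn[OF unn] gg_pos by simp
  have wnn: "\<forall>i\<in>F. 0 \<le> w i"
    unfolding w_def using Tpow_nn[OF unn] gg_pos S0 by (auto intro!: sum_nonneg)
  have wsum: "(\<Sum>i\<in>F. w i) = 1"
  proof -
    have "(\<Sum>i\<in>F. w i) = (\<Sum>n<M. (1 / (gg ^ n * S)) * aa n)"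
      unfolding w_def aa_def nrm_def u_def by (subst sum.swap) (simp add: sum_distrib_left)
    also have "\<dots> = (\<Sum>n<M. bb n) / S" unfolding bb_def by (simp add: sum_divide_distrib)
    finally show ?thesis using S0 unfolding S_def by simp
  qed
  have Tw: "(\<Sum>i\<in>F. w i * A i j) = gg / S * (\<Sum>n<M. h (Suc n) j)" for j
  proof -
    have "(\<Sum>i\<in>F. w i * A i j) = Tm F A w j" unfolding Tm_def ..
    also have "Tm F A w = (\<lambda>j. \<Sum>n<M. (1 / (gg ^ n * S)) * Tm F A ((Tm F A ^^ n) u) j)"
      unfolding w_def[abs_def] by (rule Tm_lin)
    finally show ?thesis unfolding h_def using gg_pos S0
      by (simp add: sum_distrib_left field_simps)
  qed
  have gw: "gg * w j = gg / S * (\<Sum>n<M. h n j)" for j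
    unfolding w_def h_def using gg_pos S0 by (simp add: sum_distrib_left field_simps)
  have diff: "(\<Sum>i\<in>F. w i * A i j) - gg * w j = gg / S * (h M j - h 0 j)" for j
  proof -
    have "(\<Sum>n<M. h (Suc n) j) - (\<Sum>n<M. h n j) = h M j - h 0 j"
      using sum_lessThan_telescope[of "\<lambda>n. h n j" M] by (simp add: sum_subtractf)
    then show ?thesis unfolding Tw gw by (metis right_diff_distrib)
  qed
  have "(\<Sum>j\<in>F. \<bar>(\<Sum>i\<in>F. w i * A i j) - gg * w j\<bar>) \<le> (\<Sum>j\<in>F. gg / S * (h M j + h 0 j))"
  proof (intro sum_mono)
    fix j assume j: "j \<in> F"
    have "\<bar>(\<Sum>i\<in>F. w i * A i j) - gg * w j\<bar> = gg / S * \<bar>h M j - h 0 j\<bar>"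
      unfolding diff using gg_pos S0 by (simp add: abs_mult)
    also have "\<dots> \<le> gg / S * (h M j + h 0 j)" using hnn[OF j, of M] hnn[OF j, of 0] gg_pos S0
      by (intro mult_left_mono) auto
    finally show "\<bar>(\<Sum>i\<in>F. w i * A i j) - gg * w j\<bar> \<le> gg / S * (h M j + h 0 j)" .
  qed
  also have "\<dots> = gg / S * (bb M + card F)"
    unfolding sum.distrib sum_distrib_left[symmetric] h_def bb_def aa_def nrm_def u_def
    by (simp add: sum_divide_distrib)
  also have "\<dots> = gg * (bb M / S) + gg * (card F / S)" using S0 by (simp add: field_simps)
  also have "\<dots> \<le> C * e0 + C * (e / (2 * C))"
  proof (intro add_mono mult_mono)
    show "bb M / S \<le> e0" using M(2) S0 unfolding S_def[symmetric] by (simp add: field_simps)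
    show "card F / S \<le> e / (2 * C)" using SM1 S0 e C0 by (simp add: field_simps)
  qed (use gg_hi gg_pos e0 e C0 S0 bb_nonneg in auto)
  also have "\<dots> = e" unfolding e0_def using C0 by (simp add: field_simps)
  finally show ?thesis using wnn wsum gg_lo gg_hi by blast
qed

end


fun wtf :: "(nat \<Rightarrow> nat) \<Rightarrow> nat \<Rightarrow> real" where
  "wtf c 0 = 1 / (4 * c 0)"
| "wtf c (Suc n) = wtf c n / (4 * c (Suc n))"

lemma net_exists:
  assumes "compact (UNIV :: 'x::metric_space set)" "r > 0"
  shows "\<exists>N::nat. \<exists>p::nat \<Rightarrow> 'x. N \<ge> 1 \<and> (\<forall>x. \<exists>i<N. dist x (p i) < r)"
proof -
  obtain k :: "'x set" where k: "finite k" "UNIV \<subseteq> (\<Union>x\<in>k. ball x r)"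
    using assms seq_compact_imp_totally_bounded[of "UNIV :: 'x set"] compact_imp_seq_compact by blast
  obtain N :: nat and p where Np: "k = p ` {i. i < N}" using finite_imp_nat_seg_image_inj_on[OF k(1)] by blast
  have "\<forall>x. \<exists>i<N. dist x (p i) < r"
  proof
    fix x :: 'x
    have "x \<in> (\<Union>x\<in>k. ball x r)" using k(2) by blast
    then obtain y where "y \<in> k" "dist y x < r" by auto
    then show "\<exists>i<N. dist x (p i) < r" using Np by (auto simp: dist_commute)
  qed
  moreover then have "N \<ge> 1" by (metis less_one not_less not_less_zero)
  ultimately show ?thesis by blast
qed

context
  fixes cnt :: "nat \<Rightarrow> nat" and pts :: "nat \<Rightarrow> nat \<Rightarrow> 'x::metric_space"
  assumes cnt1: "\<And>n. cnt n \<ge> 1"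
    and netp: "\<And>n x. \<exists>i<cnt n. dist x (pts n i) < (1/2) ^ n"
    and cpt: "compact (UNIV :: 'x set)"
begin

definition "wt = wtf cnt"

lemma wt_pos: "wt n > 0"
  unfolding wt_def using cnt1 by (induction n) (auto intro!: divide_pos_pos simp: Suc_le_eq)

lemma wt_Suc: "wt (Suc n) \<le> wt n / 4"
proof -
  have "wt (Suc n) = wt n / (4 * cnt (Suc n))" unfolding wt_def by simp
  also have "\<dots> \<le> wt n / 4" using wt_pos[of n] cnt1[of "Suc n"]
    by (intro divide_left_mono) auto
  finally show ?thesis .
qed

lemma wt_add: "wt (n + k) \<le> wt n * (1/4) ^ k"
proof (induction k)
  case 0 then show ?case by simp
next
  case (Suc k)
  have "wt (n + Suc k) \<le> wt (n + k) / 4" using wt_Suc[of "n + k"] by simp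
  also have "\<dots> \<le> wt n * (1/4) ^ k / 4" using Suc by simp
  finally show ?case by simp
qed

lemma wt_mono: "n \<le> m \<Longrightarrow> wt m \<le> wt n"
proof -
  have "wt (Suc k) \<le> wt k" for k using wt_Suc[of k] wt_pos[of k] by simp
  then show "n \<le> m \<Longrightarrow> wt m \<le> wt n" by (rule lift_Suc_antimono_le)
qed

lemma cwt_Suc: "cnt (Suc n) * wt (Suc n) = wt n / 4"
  unfolding wt_def using cnt1[of "Suc n"] by simp

lemma wt_le: "wt n \<le> (1/4) ^ n"
proof (induction n)
  case 0 then show ?case using cnt1[of 0] by (simp add: wt_def)
next
  case (Suc n) then show ?case using wt_Suc[of n] by simp
qed

lemma cwt_le: "cnt n * wt n \<le> (1/4) ^ n"
proof (cases n)
  case 0 then show ?thesis using cnt1[of 0] by (simp add: wt_def)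
next
  case (Suc m)
  then show ?thesis using cwt_Suc[of m] wt_le[of m] by simp
qed

lemma tail_bound: "(\<Sum>k. cnt (k + Suc n) * wt (k + Suc n)) \<le> wt n / 3"
proof -
  have eq: "cnt (k + Suc n) * wt (k + Suc n) = wt (n + k) / 4" for k
    using cwt_Suc[of "n + k"] by (simp add: add.commute)
  have le: "wt (n + k) / 4 \<le> wt n / 4 * (1/4) ^ k" for k using wt_add[of n k] by simp
  have s: "summable (\<lambda>k. wt n / 4 * (1/4::real) ^ k)" by (intro summable_mult summable_geometric) simp
  have s2: "summable (\<lambda>k. wt (n + k) / 4)"
    by (rule summable_comparison_test'[OF s, of 0]) (use le wt_pos in \<open>auto simp: less_imp_le\<close>)
  have "(\<Sum>k. cnt (k + Suc n) * wt (k + Suc n)) \<le> (\<Sum>k. wt n / 4 * (1/4) ^ k)"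
    unfolding eq by (intro suminf_le s s2 le)
  also have "\<dots> = wt n / 4 * (\<Sum>k. (1/4::real) ^ k)" by (rule suminf_mult) (simp add: summable_geometric)
  also have "\<dots> = wt n / 3" by (simp add: suminf_geometric)
  finally show ?thesis .
qed

lemma summable_tail: "summable (\<lambda>k. cnt (k + m) * wt (k + m))"
proof -
  have "summable (\<lambda>k. cnt k * wt k)"
  proof (rule summable_comparison_test'[where g="\<lambda>k. (1/4::real)^k"])
    show "summable (\<lambda>k. (1/4::real)^k)" by (simp add: summable_geometric)
    fix n
    have "0 \<le> real (cnt n) * wt n" using wt_pos[of n] by simp
    then have "norm (real (cnt n) * wt n) = real (cnt n) * wt n" by simp
    then show "norm (real (cnt n) * wt n) \<le> (1/4) ^ n" using cwt_le[of n] by simp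
  qed
  then show ?thesis by (subst summable_iff_shift)
qed

definition adm :: "(nat \<Rightarrow> nat) \<Rightarrow> bool" where
  "adm s \<longleftrightarrow> (\<forall>n. s n < cnt n) \<and> (\<forall>n. dist (pts n (s n)) (pts (Suc n) (s (Suc n))) < 2 * (1/2) ^ n)"

definition enc :: "(nat \<Rightarrow> nat) \<Rightarrow> real" where
  "enc s = (\<Sum>n. real (s n) * wt n)"

lemma summable_enc: assumes "\<forall>n. s n < cnt n" shows "summable (\<lambda>n. real (s n) * wt n)"
proof (rule summable_comparison_test'[where g="\<lambda>k. (1/4::real)^k"])
  show "summable (\<lambda>k. (1/4::real)^k)" by (simp add: summable_geometric)
  fix n
  have "real (s n) * wt n \<le> cnt n * wt n" using assms wt_pos[of n]
    by (intro mult_right_mono) (auto simp: less_imp_le)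
  moreover have "0 \<le> real (s n) * wt n" using wt_pos[of n] by simp
  moreover have "norm (real (s n) * wt n) = real (s n) * wt n" using calculation(2) by simp
  ultimately show "norm (real (s n) * wt n) \<le> (1/4) ^ n" using cwt_le[of n] by linarith
qed

lemma enc_diff:
  assumes "\<forall>n. s n < cnt n" "\<forall>n. s' n < cnt n"
  shows "enc s - enc s' = (\<Sum>n. (real (s n) - real (s' n)) * wt n)"
  unfolding enc_def using summable_enc[OF assms(1)] summable_enc[OF assms(2)]
  by (subst suminf_diff) (auto simp: left_diff_distrib)

lemma dterm_bound:
  assumes "\<forall>n. s n < cnt n" "\<forall>n. s' n < cnt n"
  shows "\<bar>(real (s n) - real (s' n)) * wt n\<bar> \<le> cnt n * wt n"
proof -
  have "\<bar>real (s n) - real (s' n)\<bar> \<le> cnt n" using assms[rule_format, of n] by linarith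
  then show ?thesis using wt_pos[of n] by (simp add: abs_mult)
qed

lemma tail_abs:
  assumes "\<forall>n. s n < cnt n" "\<forall>n. s' n < cnt n"
  shows "\<bar>\<Sum>k. (real (s (k + Suc n)) - real (s' (k + Suc n))) * wt (k + Suc n)\<bar> \<le> wt n / 3"
proof -
  let ?d = "\<lambda>k. (real (s (k + Suc n)) - real (s' (k + Suc n))) * wt (k + Suc n)"
  have sb: "summable (\<lambda>k. cnt (k + Suc n) * wt (k + Suc n))" by (rule summable_tail)
  have db: "norm (?d k) \<le> cnt (k + Suc n) * wt (k + Suc n)" for k
    using dterm_bound[OF assms, of "k + Suc n"] by simp
  have "\<bar>suminf ?d\<bar> \<le> (\<Sum>k. cnt (k + Suc n) * wt (k + Suc n))"
    using norm_suminf_le[OF db sb] by simp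
  also have "\<dots> \<le> wt n / 3" by (rule tail_bound)
  finally show ?thesis .
qed

lemma split_at:
  assumes "\<forall>n. s n < cnt n" "\<forall>n. s' n < cnt n"
  shows "enc s - enc s' = (\<Sum>k. (real (s (k + Suc n)) - real (s' (k + Suc n))) * wt (k + Suc n))
     + (\<Sum>i<Suc n. (real (s i) - real (s' i)) * wt i)"
proof -
  have sm: "summable (\<lambda>n. (real (s n) - real (s' n)) * wt n)"
    using summable_enc[OF assms(1)] summable_enc[OF assms(2)]
    by (simp add: left_diff_distrib summable_diff)
  show ?thesis unfolding enc_diff[OF assms] by (rule suminf_split_initial_segment[OF sm])
qed

lemma close_enc:
  assumes "\<forall>n. s n < cnt n" "\<forall>n. s' n < cnt n" "\<forall>k\<le>n. s k = s' k"
  shows "\<bar>enc s - enc s'\<bar> \<le> wt n / 3"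
proof -
  have "(\<Sum>i<Suc n. (real (s i) - real (s' i)) * wt i) = 0" using assms(3) by (intro sum.neutral) auto
  then show ?thesis using split_at[OF assms(1,2), of n] tail_abs[OF assms(1,2), of n] by simp
qed

lemma sep_enc:
  assumes "\<forall>n. s n < cnt n" "\<forall>n. s' n < cnt n" "\<forall>k<n. s k = s' k" "s n \<noteq> s' n"
  shows "\<bar>enc s - enc s'\<bar> \<ge> 2 * wt n / 3"
proof -
  have "(\<Sum>i<Suc n. (real (s i) - real (s' i)) * wt i) = (real (s n) - real (s' n)) * wt n"
    using assms(3) by (simp add: sum.neutral)
  moreover have "\<bar>(real (s n) - real (s' n)) * wt n\<bar> \<ge> wt n"
  proof -
    have "\<bar>real (s n) - real (s' n)\<bar> \<ge> 1" using assms(4) by linarith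
    then show ?thesis using wt_pos[of n] by (simp add: abs_mult mult_le_cancel_right1)
  qed
  ultimately show ?thesis using split_at[OF assms(1,2), of n] tail_abs[OF assms(1,2), of n] by linarith
qed

lemma agree_of_close:
  assumes "\<forall>n. s n < cnt n" "\<forall>n. s' n < cnt n" "\<bar>enc s - enc s'\<bar> < 2 * wt n / 3"
  shows "\<forall>k\<le>n. s k = s' k"
proof (rule ccontr)
  assume "\<not> ?thesis"
  then have ex: "\<exists>k. k \<le> n \<and> s k \<noteq> s' k" by auto
  define k where "k = (LEAST k. k \<le> n \<and> s k \<noteq> s' k)"
  have k: "k \<le> n" "s k \<noteq> s' k" using LeastI_ex[OF ex] unfolding k_def by auto
  have "\<forall>j<k. s j = s' j"
  proof (intro allI impI)
    fix j assume "j < k"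
    then show "s j = s' j" using not_less_Least[of j "\<lambda>k. k \<le> n \<and> s k \<noteq> s' k"] k unfolding k_def by auto
  qed
  then have "\<bar>enc s - enc s'\<bar> \<ge> 2 * wt k / 3" using sep_enc[OF assms(1,2)] k by blast
  moreover have "wt n \<le> wt k" using wt_mono[OF k(1)] .
  ultimately show False using assms(3) by linarith
qed

lemma enc_inj: assumes "\<forall>n. s n < cnt n" "\<forall>n. s' n < cnt n" "enc s = enc s'" shows "s = s'"
proof
  fix n
  have "\<bar>enc s - enc s'\<bar> < 2 * wt n / 3" using assms(3) wt_pos[of n] by simp
  then show "s n = s' n" using agree_of_close[OF assms(1,2)] by blast
qed

lemma small_pow: "e > 0 \<Longrightarrow> \<exists>n. (1/2::real) ^ n < e"
  using real_arch_pow_inv[of e "1/2"] by auto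

definition "pp s n = pts n (s n)"

lemma adm_lt: "adm s \<Longrightarrow> \<forall>n. s n < cnt n" unfolding adm_def by auto

lemma cauchy_bound: assumes "adm s"
  shows "dist (pp s n) (pp s (n + k)) \<le> 4 * (1/2) ^ n - 4 * (1/2) ^ (n + k)"
proof (induction k)
  case 0 then show ?case by simp
next
  case (Suc k)
  have "dist (pp s n) (pp s (n + Suc k)) \<le> dist (pp s n) (pp s (n + k)) + dist (pp s (n + k)) (pp s (Suc (n + k)))"
    by (simp add: dist_triangle)
  also have "dist (pp s (n + k)) (pp s (Suc (n + k))) < 2 * (1/2) ^ (n + k)"
    using assms unfolding adm_def pp_def by blast
  finally show ?case using Suc by simp
qed

lemma dist_pp: assumes "adm s" "n \<le> m" shows "dist (pp s n) (pp s m) \<le> 4 * (1/2) ^ n"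
proof -
  have "(1/2::real) ^ m \<ge> 0" by simp
  moreover have "n + (m - n) = m" using assms(2) by simp
  ultimately show ?thesis using cauchy_bound[OF assms(1), of n "m - n"] by (smt (verit))
qed

lemma adm_Cauchy: assumes "adm s" shows "Cauchy (pp s)"
  unfolding Cauchy_def
proof (intro allI impI)
  fix e :: real assume e: "e > 0"
  obtain M where M: "(1/2::real) ^ M < e / 8" using small_pow[of "e/8"] e by auto
  show "\<exists>M. \<forall>m\<ge>M. \<forall>n\<ge>M. dist (pp s m) (pp s n) < e"
  proof (intro exI allI impI)
    fix m n assume "m \<ge> M" "n \<ge> M"
    then have "dist (pp s m) (pp s n) \<le> dist (pp s M) (pp s m) + dist (pp s M) (pp s n)"
      by (simp add: dist_triangle3)
    also have "\<dots> \<le> 8 * (1/2) ^ M" using dist_pp[OF assms] \<open>m \<ge> M\<close> \<open>n \<ge> M\<close>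
      by (smt (verit))
    finally show "dist (pp s m) (pp s n) < e" using M by simp
  qed
qed

definition "phi s = lim (pp s)"

lemma phi_lim: assumes "adm s" shows "pp s \<longlonglongrightarrow> phi s"
proof -
  obtain l where "pp s \<longlonglongrightarrow> l" using adm_Cauchy[OF assms] compact_imp_complete[OF cpt, unfolded complete_def] by blast
  then show ?thesis unfolding phi_def by (simp add: limI)
qed

lemma phi_near: assumes "adm s" shows "dist (pp s n) (phi s) \<le> 4 * (1/2) ^ n"
proof (rule LIMSEQ_le_const2)
  show "(\<lambda>m. dist (pp s n) (pp s m)) \<longlonglongrightarrow> dist (pp s n) (phi s)"
    by (intro tendsto_intros phi_lim assms)
  show "\<exists>N. \<forall>m\<ge>N. dist (pp s n) (pp s m) \<le> 4 * (1/2) ^ n"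
    using dist_pp[OF assms] by blast
qed

lemma phi_close: assumes "adm s" "adm s'" "\<forall>k\<le>n. s k = s' k"
  shows "dist (phi s) (phi s') \<le> 8 * (1/2) ^ n"
proof -
  have "pp s n = pp s' n" using assms(3) unfolding pp_def by simp
  then have "dist (phi s) (phi s') \<le> dist (pp s n) (phi s) + dist (pp s' n) (phi s')"
    by (metis dist_commute dist_triangle)
  then show ?thesis using phi_near[OF assms(1), of n] phi_near[OF assms(2), of n] by simp
qed

definition "KK = enc ` {s. adm s}"
definition "psi t = phi (SOME s. adm s \<and> enc s = t)"

lemma psi_enc: assumes "adm s" shows "psi (enc s) = phi s"
proof -
  have ex: "\<exists>s'. adm s' \<and> enc s' = enc s" using assms by blast
  define s' where "s' = (SOME s'. adm s' \<and> enc s' = enc s)"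
  have "adm s' \<and> enc s' = enc s" unfolding s'_def by (rule someI_ex[OF ex])
  then have "s' = s" using enc_inj adm_lt assms by blast
  then show ?thesis unfolding psi_def s'_def[symmetric] by simp
qed

lemma psi_cont: "continuous_on KK psi"
  unfolding continuous_on_iff
proof (intro ballI allI impI)
  fix x e assume x: "x \<in> KK" and e: "(e::real) > 0"
  obtain s where s: "adm s" "x = enc s" using x unfolding KK_def by auto
  obtain n where n: "(1/2::real) ^ n < e / 8" using small_pow[of "e/8"] e by auto
  show "\<exists>d>0. \<forall>x'\<in>KK. dist x' x < d \<longrightarrow> dist (psi x') (psi x) < e"
  proof (intro exI conjI ballI impI)
    show "2 * wt n / 3 > 0" using wt_pos[of n] by simp
    fix x' assume x': "x' \<in> KK" "dist x' x < 2 * wt n / 3"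
    obtain s' where s': "adm s'" "x' = enc s'" using x' unfolding KK_def by auto
    have "\<forall>k\<le>n. s' k = s k" using agree_of_close[OF adm_lt[OF s'(1)] adm_lt[OF s(1)]] x'(2) s s'
      by (simp add: dist_real_def)
    then have "dist (phi s') (phi s) \<le> 8 * (1/2) ^ n" by (rule phi_close[OF s'(1) s(1)])
    then show "dist (psi x') (psi x) < e" using s s' psi_enc n by simp
  qed
qed

lemma psi_surj: "\<exists>t\<in>KK. psi t = x"
proof -
  define s where "s n = (SOME i. i < cnt n \<and> dist x (pts n i) < (1/2) ^ n)" for n
  have s: "s n < cnt n \<and> dist x (pts n (s n)) < (1/2) ^ n" for n
    unfolding s_def by (rule someI_ex) (rule netp)
  have "adm s" unfolding adm_def
  proof (intro conjI allI)
    fix n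
    show "s n < cnt n" using s by blast
    have "dist (pts n (s n)) (pts (Suc n) (s (Suc n))) \<le> dist x (pts n (s n)) + dist x (pts (Suc n) (s (Suc n)))"
      by (simp add: dist_triangle3)
    also have "\<dots> < (1/2) ^ n + (1/2) ^ Suc n" using s[of n] s[of "Suc n"] by simp
    also have "\<dots> \<le> 2 * (1/2) ^ n" by simp
    finally show "dist (pts n (s n)) (pts (Suc n) (s (Suc n))) < 2 * (1/2) ^ n" .
  qed
  have "pp s \<longlonglongrightarrow> x"
  proof (rule metric_LIMSEQ_I)
    fix r :: real assume r: "r > 0"
    obtain N where N: "(1/2::real) ^ N < r" using small_pow[OF r] by auto
    show "\<exists>no. \<forall>n\<ge>no. dist (pp s n) x < r"
    proof (intro exI allI impI)
      fix n assume "n \<ge> N"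
      then have "(1/2::real) ^ n \<le> (1/2) ^ N" by (simp add: power_decreasing)
      moreover have "dist (pp s n) x = dist x (pts n (s n))" unfolding pp_def by (simp add: dist_commute)
      ultimately show "dist (pp s n) x < r" using s[of n] N by linarith
    qed
  qed
  then have "phi s = x" using phi_lim[OF \<open>adm s\<close>] LIMSEQ_unique by blast
  moreover have "enc s \<in> KK" unfolding KK_def using \<open>adm s\<close> by blast
  ultimately show ?thesis using psi_enc[OF \<open>adm s\<close>] by metis
qed

lemma enc_term_le: "\<forall>n. s n < cnt n \<Longrightarrow> real (s n) * wt n \<le> (1/4) ^ n"
proof -
  assume a: "\<forall>n. s n < cnt n"
  have "real (s n) * wt n \<le> cnt n * wt n" using a wt_pos[of n]
    by (intro mult_right_mono) (auto simp: less_imp_le)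
  then show ?thesis using cwt_le[of n] by linarith
qed

lemma KK_bounds: "KK \<subseteq> {0..2}"
proof
  fix t assume "t \<in> KK"
  then obtain s where s: "adm s" "t = enc s" unfolding KK_def by auto
  have lt: "\<forall>n. s n < cnt n" using adm_lt[OF s(1)] .
  have "0 \<le> enc s" unfolding enc_def using summable_enc[OF lt]
    by (intro suminf_nonneg) (auto intro!: mult_nonneg_nonneg less_imp_le[OF wt_pos])
  moreover have "enc s \<le> (\<Sum>n. (1/4::real) ^ n)" unfolding enc_def
    using summable_enc[OF lt] enc_term_le[OF lt] by (intro suminf_le) (auto simp: summable_geometric)
  moreover have "(\<Sum>n. (1/4::real) ^ n) = 4/3" by (simp add: suminf_geometric)
  ultimately show "t \<in> {0..2}" using s by simp
qed

lemma KK_closed: "closed KK"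
  unfolding closed_sequential_limits
proof (intro allI impI, elim conjE)
  fix x :: "nat \<Rightarrow> real" and l assume xK: "\<forall>n. x n \<in> KK" and xl: "x \<longlonglongrightarrow> l"
  define \<sigma> where "\<sigma> k = (SOME s. adm s \<and> x k = enc s)" for k
  have \<sigma>: "adm (\<sigma> k) \<and> x k = enc (\<sigma> k)" for k
  proof -
    have ex: "\<exists>s. adm s \<and> x k = enc s" using xK[rule_format, of k] unfolding KK_def by blast
    show ?thesis using someI_ex[OF ex] unfolding \<sigma>_def .
  qed
  have C: "Cauchy x" using xl by (rule LIMSEQ_imp_Cauchy)
  have "\<exists>N. \<forall>k\<ge>N. \<forall>k'\<ge>N. dist (x k) (x k') < 2 * wt n / 3" for n
  proof -
    have "2 * wt n / 3 > 0" using wt_pos[of n] by simp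
    then show ?thesis using C[unfolded Cauchy_def, rule_format] by blast
  qed
  then obtain Nn where Nn: "\<And>n k k'. k \<ge> Nn n \<Longrightarrow> k' \<ge> Nn n \<Longrightarrow> dist (x k) (x k') < 2 * wt n / 3"
    by metis
  define N' where "N' n = (\<Sum>i\<le>n. Nn i)" for n
  have NN': "i \<le> n \<Longrightarrow> Nn i \<le> N' n" for i n unfolding N'_def by (intro member_le_sum) auto
  have N'mono: "n \<le> m \<Longrightarrow> N' n \<le> N' m" for n m unfolding N'_def by (intro sum_mono2) auto
  have agreeK: "\<sigma> k i = \<sigma> (N' i) i" if "k \<ge> N' n" "i \<le> n" for k i n
  proof -
    have "k \<ge> Nn i" using NN'[OF that(2)] that(1) by simp
    moreover have "N' i \<ge> Nn i" using NN'[of i i] by simp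
    ultimately have "dist (x k) (x (N' i)) < 2 * wt i / 3" by (rule Nn)
    then have "\<bar>enc (\<sigma> k) - enc (\<sigma> (N' i))\<bar> < 2 * wt i / 3" using \<sigma> by (simp add: dist_real_def)
    then show ?thesis using agree_of_close[OF adm_lt adm_lt] \<sigma> by blast
  qed
  define \<tau> where "\<tau> n = \<sigma> (N' n) n" for n
  have agree\<tau>: "k \<ge> N' n \<Longrightarrow> \<forall>i\<le>n. \<sigma> k i = \<tau> i" for k n
    unfolding \<tau>_def using agreeK by blast
  have adm\<tau>: "adm \<tau>" unfolding adm_def
  proof (intro conjI allI)
    fix n
    show "\<tau> n < cnt n" unfolding \<tau>_def using \<sigma> adm_lt by blast
    define k where "k = N' (Suc n)"
    have "\<sigma> k n = \<tau> n" "\<sigma> k (Suc n) = \<tau> (Suc n)"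
      using agree\<tau>[of "Suc n" k] unfolding k_def by auto
    moreover have "dist (pts n (\<sigma> k n)) (pts (Suc n) (\<sigma> k (Suc n))) < 2 * (1/2) ^ n"
      using \<sigma>[of k] unfolding adm_def by blast
    ultimately show "dist (pts n (\<tau> n)) (pts (Suc n) (\<tau> (Suc n))) < 2 * (1/2) ^ n" by simp
  qed
  have "x \<longlonglongrightarrow> enc \<tau>"
  proof (rule metric_LIMSEQ_I)
    fix r :: real assume r: "r > 0"
    obtain n where n: "(1/2::real) ^ n < r" using small_pow[OF r] by auto
    have "(1/4::real) ^ n \<le> (1/2) ^ n" by (intro power_mono) auto
    then have "wt n \<le> (1/2) ^ n" using wt_le[of n] by linarith
    then have wn: "wt n / 3 < r" using n wt_pos[of n] by simp
    show "\<exists>no. \<forall>k\<ge>no. dist (x k) (enc \<tau>) < r"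
    proof (intro exI allI impI)
      fix k assume "k \<ge> N' n"
      then have "\<forall>i\<le>n. \<sigma> k i = \<tau> i" by (rule agree\<tau>)
      then have "\<bar>enc (\<sigma> k) - enc \<tau>\<bar> \<le> wt n / 3" using close_enc adm_lt \<sigma> adm\<tau> by blast
      then show "dist (x k) (enc \<tau>) < r" using \<sigma>[of k] wn by (simp add: dist_real_def)
    qed
  qed
  then have "l = enc \<tau>" using xl LIMSEQ_unique by blast
  then show "l \<in> KK" unfolding KK_def using adm\<tau> by blast
qed

lemma KK_compact: "compact KK"
  unfolding compact_eq_bounded_closed
  using KK_closed KK_bounds bounded_subset[OF bounded_closed_interval] by blast

end

lemma coding:
  assumes cpt: "compact (UNIV :: 'x::metric_space set)"
  shows "\<exists>K (\<psi>::real \<Rightarrow> 'x). compact K \<and> K \<subseteq> {0..2} \<and> continuous_on K \<psi> \<and> (\<forall>x. \<exists>t\<in>K. \<psi> t = x)"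
proof -
  have h: "\<forall>n. \<exists>N::nat. \<exists>p::nat \<Rightarrow> 'x. N \<ge> 1 \<and> (\<forall>x. \<exists>i<N. dist x (p i) < (1/2) ^ n)"
    using net_exists[OF cpt] by simp
  obtain cnt where h2: "\<forall>n. \<exists>p::nat \<Rightarrow> 'x. cnt n \<ge> 1 \<and> (\<forall>x. \<exists>i<cnt n. dist x (p i) < (1/2) ^ n)"
    using choice[OF h] by blast
  obtain pts :: "nat \<Rightarrow> nat \<Rightarrow> 'x" where "\<forall>n. cnt n \<ge> 1 \<and> (\<forall>x. \<exists>i<cnt n. dist x (pts n i) < (1/2) ^ n)"
    using choice[OF h2] by blast
  then have cp: "\<And>n. cnt n \<ge> 1" "\<And>n x. \<exists>i<cnt n. dist x (pts n i) < (1/2) ^ n" by auto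
  show ?thesis
    using KK_compact[OF cp cpt] KK_bounds[OF cp cpt] psi_cont[OF cp cpt] psi_surj[OF cp cpt] by blast
qed


lemma integral_scale_ennreal:
  fixes f :: "'a \<Rightarrow> real"
  assumes r: "r \<ge> 0" and f: "f \<in> borel_measurable M"
  shows "integral\<^sup>L (scale_measure (ennreal r) M) f = r * integral\<^sup>L M f"
proof -
  have eq: "scale_measure (ennreal r) M = density M (\<lambda>_. ennreal r)"
  proof (rule measure_eqI)
    show "sets (scale_measure (ennreal r) M) = sets (density M (\<lambda>_. ennreal r))" by simp
    fix A assume "A \<in> sets (scale_measure (ennreal r) M)"
    then have A: "A \<in> sets M" by simp
    show "emeasure (scale_measure (ennreal r) M) A = emeasure (density M (\<lambda>_. ennreal r)) A"
      using A by (simp add: emeasure_density nn_integral_cmult_indicator)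
  qed
  show ?thesis unfolding eq using r f by (subst integral_density) auto
qed

context
  fixes \<tau> :: "'t::metric_space \<Rightarrow> 'x::metric_space \<Rightarrow> 'x"
    and q :: "'x \<Rightarrow> 't measure" and Cq cq :: real
  assumes X_compact: "compact (UNIV :: 'x set)"
    and Theta_compact: "compact (UNIV :: 't set)"
    and tau_cont: "continuous_on UNIV (\<lambda>(\<theta>, x). \<tau> \<theta> x)"
    and q_borel: "\<forall>x. sets (q x) = sets (borel :: 't measure)"
    and q_finite: "\<forall>x. finite_measure (q x)"
    and q_sup: "\<forall>x. measure (q x) UNIV \<le> Cq"
    and q_inf: "cq > 0" "\<forall>x. cq \<le> measure (q x) UNIV"
    and q_weak_cont: "\<forall>f::'t \<Rightarrow> real. continuous_on UNIV f \<longrightarrow>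
                        continuous_on UNIV (\<lambda>x. \<integral>\<theta>. f \<theta> \<partial>(q x))"
begin

lemma space_q: "space (q x) = UNIV"
  using sets_eq_imp_space_eq[OF q_borel[rule_format, of x]] by simp

lemma Cq_pos: "Cq > 0" using q_inf q_sup by (meson less_le_trans order_trans)

lemma meas_q: "f \<in> borel_measurable borel \<Longrightarrow> f \<in> borel_measurable (q x)"
  using measurable_cong_sets[OF q_borel[rule_format, of x] refl] by blast

lemma cont_bounded: "continuous_on UNIV (f :: 'a::metric_space \<Rightarrow> real) \<Longrightarrow> compact (UNIV :: 'a set) \<Longrightarrow> \<exists>B. \<forall>x. \<bar>f x\<bar> \<le> B"
proof -
  assume "continuous_on UNIV f" "compact (UNIV :: 'a set)"
  then have "compact (range f)" by (rule compact_continuous_image)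
  then have "bounded (range f)" by (rule compact_imp_bounded)
  then show ?thesis unfolding bounded_iff by auto
qed

lemma integrable_q: assumes "f \<in> borel_measurable borel" "\<And>\<theta>. \<bar>f \<theta>\<bar> \<le> B"
  shows "integrable (q x) (f :: 't \<Rightarrow> real)"
proof -
  interpret finite_measure "q x" using q_finite by blast
  show ?thesis by (rule integrable_const_bound[where B=B]) (use assms meas_q in auto)
qed

lemma integrable_q_cont: "continuous_on UNIV (f :: 't \<Rightarrow> real) \<Longrightarrow> integrable (q x) f"
  using cont_bounded[OF _ Theta_compact] integrable_q borel_measurable_continuous_onI by metis

lemma integral_q_bound: assumes "f \<in> borel_measurable borel" "\<And>\<theta>. \<bar>f \<theta>\<bar> \<le> B"
  shows "\<bar>\<integral>\<theta>. f \<theta> \<partial>q x\<bar> \<le> B * Cq"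
proof -
  have B0: "B \<ge> 0" using assms(2)[of undefined] by simp
  have "\<bar>\<integral>\<theta>. f \<theta> \<partial>q x\<bar> \<le> (\<integral>\<theta>. \<bar>f \<theta>\<bar> \<partial>q x)" using integral_norm_bound[of "q x" f] by simp
  also have "\<dots> \<le> (\<integral>\<theta>. B \<partial>q x)"
    by (intro integral_mono integrable_q[OF assms(1) assms(2)] assms(2))
       (auto intro: integrable_q[where B=B] simp: B0 borel_measurable_abs assms)
  also have "\<dots> = measure (q x) UNIV * B" by (simp add: space_q)
  also have "\<dots> \<le> Cq * B" using q_sup B0 by (intro mult_right_mono) auto
  finally show ?thesis by (simp add: mult.commute)
qed

lemma G_cont: "continuous_on UNIV f \<Longrightarrow> continuous_on UNIV (\<lambda>(\<theta>, x). f (\<tau> \<theta> x))"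
proof -
  assume f: "continuous_on UNIV f"
  have "continuous_on UNIV (f \<circ> (\<lambda>(\<theta>, x). \<tau> \<theta> x))"
    by (rule continuous_on_compose[OF tau_cont]) (rule continuous_on_subset[OF f], simp)
  then show ?thesis by (simp add: o_def case_prod_unfold)
qed

lemma Bq_cont: assumes f: "continuous_on UNIV (f :: 'x \<Rightarrow> real)"
  shows "continuous_on UNIV (Bq_fun q \<tau> f)"
  unfolding continuous_on_iff
proof (intro ballI allI impI)
  fix x :: 'x and e :: real assume e: "e > 0"
  define G where "G = (\<lambda>(\<theta>, x). f (\<tau> \<theta> x))"
  have Gc: "continuous_on UNIV G" unfolding G_def by (rule G_cont[OF f])
  have "compact (UNIV :: ('t \<times> 'x) set)" using compact_Times[OF Theta_compact X_compact] by simp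
  then have Gu: "uniformly_continuous_on UNIV G" using Gc compact_uniformly_continuous by blast
  define e1 where "e1 = e / (2 * (Cq + 1))"
  have Cq: "Cq > 0" by (rule Cq_pos)
  have e1: "e1 > 0" unfolding e1_def using e Cq by simp
  obtain d1 where d1: "d1 > 0" "\<And>a b. dist a b < d1 \<Longrightarrow> dist (G a) (G b) < e1"
    using Gu[unfolded uniformly_continuous_on_def, rule_format, OF e1] by auto
  define h where "h \<theta> = f (\<tau> \<theta> x)" for \<theta>
  have hc: "continuous_on UNIV h"
  proof -
    have "continuous_on UNIV (G \<circ> (\<lambda>\<theta>. (\<theta>, x)))"
      by (rule continuous_on_compose) (auto intro!: continuous_intros continuous_on_subset[OF Gc])
    then show ?thesis by (simp add: h_def G_def o_def)
  qed
  have "continuous_on UNIV (\<lambda>y. \<integral>\<theta>. h \<theta> \<partial>(q y))" using q_weak_cont hc by blast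
  then obtain d2 where d2: "d2 > 0" "\<And>y. dist y x < d2 \<Longrightarrow> dist (\<integral>\<theta>. h \<theta> \<partial>(q y)) (\<integral>\<theta>. h \<theta> \<partial>(q x)) < e / 2"
    unfolding continuous_on_iff using e by (metis UNIV_I half_gt_zero)
  show "\<exists>d>0. \<forall>y\<in>UNIV. dist y x < d \<longrightarrow> dist (Bq_fun q \<tau> f y) (Bq_fun q \<tau> f x) < e"
  proof (intro exI conjI ballI impI)
    show "min d1 d2 > 0" using d1 d2 by simp
    fix y assume y: "dist y x < min d1 d2"
    have cG: "continuous_on UNIV (\<lambda>\<theta>. f (\<tau> \<theta> y))"
    proof -
      have "continuous_on UNIV (G \<circ> (\<lambda>\<theta>. (\<theta>, y)))"
        by (rule continuous_on_compose) (auto intro!: continuous_intros continuous_on_subset[OF Gc])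
      then show ?thesis by (simp add: G_def o_def)
    qed
    have i1: "integrable (q y) (\<lambda>\<theta>. f (\<tau> \<theta> y))" by (rule integrable_q_cont[OF cG])
    have i2: "integrable (q y) h" by (rule integrable_q_cont[OF hc])
    have "Bq_fun q \<tau> f y - Bq_fun q \<tau> f x = (\<integral>\<theta>. f (\<tau> \<theta> y) - h \<theta> \<partial>(q y)) + ((\<integral>\<theta>. h \<theta> \<partial>(q y)) - (\<integral>\<theta>. h \<theta> \<partial>(q x)))"
      unfolding Bq_fun_def h_def using i1 i2 unfolding h_def by (simp add: Bochner_Integration.integral_diff)
    moreover have "\<bar>\<integral>\<theta>. f (\<tau> \<theta> y) - h \<theta> \<partial>(q y)\<bar> \<le> e1 * Cq"
    proof (rule integral_q_bound)
      show "(\<lambda>\<theta>. f (\<tau> \<theta> y) - h \<theta>) \<in> borel_measurable borel"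
        using cG hc by (intro borel_measurable_continuous_onI continuous_intros)
      fix \<theta> :: 't
      have "dist (\<theta>, y) (\<theta>, x) < d1" using y by (simp add: dist_Pair_Pair)
      then have "dist (G (\<theta>, y)) (G (\<theta>, x)) < e1" by (rule d1)
      then show "\<bar>f (\<tau> \<theta> y) - h \<theta>\<bar> \<le> e1" by (simp add: G_def h_def dist_real_def)
    qed
    moreover have "\<bar>(\<integral>\<theta>. h \<theta> \<partial>(q y)) - (\<integral>\<theta>. h \<theta> \<partial>(q x))\<bar> < e / 2"
      using d2(2)[of y] y by (simp add: dist_real_def)
    moreover have "e1 * Cq < e / 2" unfolding e1_def using e Cq by (simp add: field_simps)
    moreover have "\<bar>(\<integral>\<theta>. f (\<tau> \<theta> y) - h \<theta> \<partial>(q y)) + ((\<integral>\<theta>. h \<theta> \<partial>(q y)) - (\<integral>\<theta>. h \<theta> \<partial>(q x)))\<bar>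
       \<le> \<bar>\<integral>\<theta>. f (\<tau> \<theta> y) - h \<theta> \<partial>(q y)\<bar> + \<bar>(\<integral>\<theta>. h \<theta> \<partial>(q y)) - (\<integral>\<theta>. h \<theta> \<partial>(q x))\<bar>"
      by (rule abs_triangle_ineq)
    ultimately show "dist (Bq_fun q \<tau> f y) (Bq_fun q \<tau> f x) < e" unfolding dist_real_def
      by linarith
  qed
qed

lemma comp_cont: "continuous_on UNIV f \<Longrightarrow> continuous_on UNIV (\<lambda>\<theta>. f (\<tau> \<theta> x))"
proof -
  assume f: "continuous_on UNIV f"
  have "continuous_on UNIV ((\<lambda>(\<theta>, x). f (\<tau> \<theta> x)) \<circ> (\<lambda>\<theta>. (\<theta>, x)))"
    by (rule continuous_on_compose) (auto intro!: continuous_intros continuous_on_subset[OF G_cont[OF f]])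
  then show ?thesis by (simp add: o_def)
qed

lemma Bq_integrable: "continuous_on UNIV (f :: 'x \<Rightarrow> real) \<Longrightarrow> integrable (q x) (\<lambda>\<theta>. f (\<tau> \<theta> x))"
  by (intro integrable_q_cont comp_cont)

lemma Bq_add: "continuous_on UNIV f \<Longrightarrow> continuous_on UNIV g \<Longrightarrow>
    Bq_fun q \<tau> (\<lambda>y. f y + g y) x = Bq_fun q \<tau> f x + Bq_fun q \<tau> g x"
  unfolding Bq_fun_def by (simp add: Bq_integrable)

lemma Bq_diff: "continuous_on UNIV f \<Longrightarrow> continuous_on UNIV g \<Longrightarrow>
    Bq_fun q \<tau> (\<lambda>y. f y - g y) x = Bq_fun q \<tau> f x - Bq_fun q \<tau> g x"
  unfolding Bq_fun_def by (simp add: Bq_integrable)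

lemma Bq_scale: "Bq_fun q \<tau> (\<lambda>y. a * f y) x = a * Bq_fun q \<tau> f x"
  unfolding Bq_fun_def by simp

lemma Bq_sum: "(\<And>i. i \<in> S \<Longrightarrow> continuous_on UNIV (f i)) \<Longrightarrow>
    Bq_fun q \<tau> (\<lambda>y. \<Sum>i\<in>S. f i y) x = (\<Sum>i\<in>S. Bq_fun q \<tau> (f i) x)"
  unfolding Bq_fun_def by (rule Bochner_Integration.integral_sum) (rule Bq_integrable)

lemma Bq_mono: "continuous_on UNIV f \<Longrightarrow> continuous_on UNIV g \<Longrightarrow> (\<And>y. f y \<le> g y) \<Longrightarrow>
    Bq_fun q \<tau> f x \<le> Bq_fun q \<tau> g x"
  unfolding Bq_fun_def by (intro integral_mono Bq_integrable) auto

lemma Bq_one: "Bq_fun q \<tau> (\<lambda>_. 1) x = measure (q x) UNIV"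
  unfolding Bq_fun_def by (simp add: space_q)

lemma Bq_bound: assumes "continuous_on UNIV f" "\<And>y. \<bar>f y\<bar> \<le> B"
  shows "\<bar>Bq_fun q \<tau> f x\<bar> \<le> B * Cq"
  unfolding Bq_fun_def
  by (rule integral_q_bound) (use assms comp_cont borel_measurable_continuous_onI in auto)

lemma Bq_in_bcontfun: "Bq_fun q \<tau> (apply_bcontfun g) \<in> bcontfun"
proof (rule bcontfun_normI)
  show "continuous_on UNIV (Bq_fun q \<tau> (apply_bcontfun g))" by (rule Bq_cont) simp
  fix x
  have "\<bar>Bq_fun q \<tau> (apply_bcontfun g) x\<bar> \<le> norm g * Cq"
    by (rule Bq_bound) (use norm_bounded[of g] in auto)
  then show "norm (Bq_fun q \<tau> (apply_bcontfun g) x) \<le> norm g * Cq" by simp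
qed

lemma Bq_inv: "apply_bcontfun (Bcontfun (Bq_fun q \<tau> (apply_bcontfun g))) = Bq_fun q \<tau> (apply_bcontfun g)"
  by (rule Bcontfun_inverse[OF Bq_in_bcontfun])

lemma Bq_bounded_linear: "bounded_linear (\<lambda>g. Bcontfun (Bq_fun q \<tau> (apply_bcontfun g)))"
proof (rule bounded_linear_intro[where K=Cq])
  fix g h :: "'x \<Rightarrow>\<^sub>C real"
  show "Bcontfun (Bq_fun q \<tau> (apply_bcontfun (g + h))) =
        Bcontfun (Bq_fun q \<tau> (apply_bcontfun g)) + Bcontfun (Bq_fun q \<tau> (apply_bcontfun h))"
    by (rule bcontfun_eqI, simp only: Bq_inv) (simp add: Bq_add Bq_inv)
next
  fix r :: real and g :: "'x \<Rightarrow>\<^sub>C real"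
  show "Bcontfun (Bq_fun q \<tau> (apply_bcontfun (r *\<^sub>R g))) = r *\<^sub>R Bcontfun (Bq_fun q \<tau> (apply_bcontfun g))"
    by (rule bcontfun_eqI, simp only: Bq_inv) (simp add: Bq_scale Bq_inv)
next
  fix g :: "'x \<Rightarrow>\<^sub>C real"
  show "norm (Bcontfun (Bq_fun q \<tau> (apply_bcontfun g))) \<le> norm g * Cq"
  proof (rule norm_bound)
    fix x
    have "\<bar>Bq_fun q \<tau> (apply_bcontfun g) x\<bar> \<le> norm g * Cq"
      by (rule Bq_bound) (use norm_bounded[of g] in auto)
    then show "norm (apply_bcontfun (Bcontfun (Bq_fun q \<tau> (apply_bcontfun g))) x) \<le> norm g * Cq"
      by (simp add: Bcontfun_inverse[OF Bq_in_bcontfun])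
  qed
qed

lemma Bq_op_apply: "apply_bcontfun (blinfun_apply (Bq_op q \<tau>) g) = Bq_fun q \<tau> (apply_bcontfun g)"
  unfolding Bq_op_def bounded_linear_Blinfun_apply[OF Bq_bounded_linear]
  by (simp add: Bcontfun_inverse[OF Bq_in_bcontfun])

lemma pow_apply: "apply_bcontfun (blinfun_apply (blinfun_pow (Bq_op q \<tau>) n) g) = (Bq_fun q \<tau> ^^ n) (apply_bcontfun g)"
proof (induction n)
  case 0 then show ?case by (simp add: blinfun_pow_def)
next
  case (Suc n)
  have "blinfun_pow (Bq_op q \<tau>) (Suc n) = Bq_op q \<tau> o\<^sub>L blinfun_pow (Bq_op q \<tau>) n"
    by (simp add: blinfun_pow_def)
  then show ?case using Suc by (simp add: Bq_op_apply)
qed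

lemma iter_cont: "continuous_on UNIV f \<Longrightarrow> continuous_on UNIV ((Bq_fun q \<tau> ^^ n) f)"
  by (induction n) (auto intro: Bq_cont)

lemma iter_le_norm: "(Bq_fun q \<tau> ^^ n) (\<lambda>_. 1) x \<le> norm (blinfun_pow (Bq_op q \<tau>) n)"
proof -
  let ?T = "blinfun_pow (Bq_op q \<tau>) n" and ?g = "const_bcontfun (1::real) :: 'x \<Rightarrow>\<^sub>C real"
  have ng: "norm ?g \<le> 1" by (rule norm_bound) simp
  have "(Bq_fun q \<tau> ^^ n) (\<lambda>_. 1) x = apply_bcontfun (blinfun_apply ?T ?g) x"
    by (simp add: pow_apply)
  also have "\<dots> \<le> norm (blinfun_apply ?T ?g)" using norm_bounded[of "blinfun_apply ?T ?g" x] by simp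
  also have "\<dots> \<le> norm ?T * norm ?g" by (rule norm_blinfun)
  also have "\<dots> \<le> norm ?T" using ng by (simp add: mult_left_le)
  finally show ?thesis .
qed

lemma level: assumes dl: "dl > 0" and ep: "ep > 0"
  shows "\<exists>F w lam. finite F \<and> (\<forall>i\<in>F. 0 \<le> w i) \<and> (\<Sum>i\<in>F. w i) = 1 \<and> cq \<le> lam \<and> lam \<le> Cq \<and>
     (\<forall>f eta Mf. continuous_on UNIV f \<longrightarrow> (\<forall>x y. dist x y < dl \<longrightarrow> \<bar>f x - f y\<bar> \<le> eta) \<longrightarrow>
        (\<forall>x. \<bar>f x\<bar> \<le> Mf) \<longrightarrow>
        \<bar>(\<Sum>i\<in>F. w i * Bq_fun q \<tau> f i) - lam * (\<Sum>i\<in>F. w i * f i)\<bar> \<le> Cq * eta + ep * Mf)"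
proof -
  obtain N :: nat and p :: "nat \<Rightarrow> 'x" where Np: "N \<ge> 1" "\<And>x. \<exists>i<N. dist x (p i) < dl"
    using net_exists[OF X_compact dl] by blast
  define F where "F = p ` {..<N}"
  have fin: "finite F" unfolding F_def by simp
  have "p 0 \<in> F" unfolding F_def using Np(1) by auto
  then have ne: "F \<noteq> {}" by auto
  have near: "\<exists>j\<in>F. dist x j < dl" for x using Np(2)[of x] unfolding F_def by auto
  define gd where "gd (j::'x) (x::'x) = max 0 (dl - dist x j)" for j x
  define den where "den x = (\<Sum>l\<in>F. gd l x)" for x
  have gd_nn: "gd j x \<ge> 0" for j x unfolding gd_def by simp
  have den_pos: "den x > 0" for x
  proof -
    obtain l where l: "l \<in> F" "dist x l < dl" using near by blast
    have "0 < gd l x" unfolding gd_def using l by simp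
    also have "gd l x \<le> den x" unfolding den_def using fin l(1) gd_nn by (intro member_le_sum) auto
    finally show ?thesis .
  qed
  define \<phi> where "\<phi> j x = gd j x / den x" for j x
  have gd_cont: "continuous_on UNIV (gd j)" for j
    unfolding gd_def[abs_def] by (intro continuous_intros)
  have den_cont: "continuous_on UNIV den"
    unfolding den_def[abs_def] by (intro continuous_on_sum gd_cont)
  have phi_cont: "continuous_on UNIV (\<phi> j)" for j
    unfolding \<phi>_def[abs_def] using den_pos by (intro continuous_on_divide gd_cont den_cont) (auto simp: less_irrefl dual_order.strict_implies_not_eq)
  have phi_nn: "\<phi> j x \<ge> 0" for j x unfolding \<phi>_def using gd_nn den_pos by (simp add: less_imp_le)
  have phi_sum: "(\<Sum>j\<in>F. \<phi> j x) = 1" for x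
    unfolding \<phi>_def using den_pos[of x] by (simp add: sum_divide_distrib[symmetric] den_def)
  have phi_supp: "\<phi> j x \<noteq> 0 \<Longrightarrow> dist x j < dl" for j x
    unfolding \<phi>_def gd_def by (cases "dist x j < dl") auto
  define A where "A i j = Bq_fun q \<tau> (\<phi> j) i" for i j
  have A_nn: "A i j \<ge> 0" for i j
  proof -
    have "Bq_fun q \<tau> (\<lambda>_. 0) i \<le> A i j" unfolding A_def
      by (rule Bq_mono) (auto intro: phi_cont phi_nn)
    then show ?thesis by (simp add: Bq_fun_def)
  qed
  have rowsum: "(\<Sum>j\<in>F. A i j) = measure (q i) UNIV" for i
  proof -
    have "(\<Sum>j\<in>F. A i j) = Bq_fun q \<tau> (\<lambda>y. \<Sum>j\<in>F. \<phi> j y) i" unfolding A_def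
      by (rule Bq_sum[symmetric]) (rule phi_cont)
    also have "\<dots> = Bq_fun q \<tau> (\<lambda>_. 1) i" by (simp add: phi_sum)
    finally show ?thesis by (simp add: Bq_one)
  qed
  obtain w lam where wl: "\<forall>i\<in>F. 0 \<le> w i" "(\<Sum>i\<in>F. w i) = 1" "cq \<le> lam" "lam \<le> Cq"
    "(\<Sum>j\<in>F. \<bar>(\<Sum>i\<in>F. w i * A i j) - lam * w j\<bar>) \<le> ep"
    using approx_eigvec[of F A cq Cq ep] fin ne A_nn rowsum q_inf q_sup ep by force
  have main: "\<bar>(\<Sum>i\<in>F. w i * Bq_fun q \<tau> f i) - lam * (\<Sum>i\<in>F. w i * f i)\<bar> \<le> Cq * eta + ep * Mf"
    if f: "continuous_on UNIV f" and fu: "\<forall>x y. dist x y < dl \<longrightarrow> \<bar>f x - f y\<bar> \<le> eta"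
      and fb: "\<forall>x. \<bar>f x\<bar> \<le> Mf" for f eta Mf
  proof -
    define Pf where "Pf y = (\<Sum>j\<in>F. f j * \<phi> j y)" for y
    have Pf_cont: "continuous_on UNIV Pf" unfolding Pf_def[abs_def]
      by (intro continuous_on_sum continuous_on_mult continuous_on_const phi_cont)
    have Mf0: "Mf \<ge> 0" using fb by (meson abs_ge_zero order_trans)
    have eta0: "eta \<ge> 0" using fu[rule_format, of undefined undefined] dl by simp
    have err: "\<bar>f y - Pf y\<bar> \<le> eta" for y
    proof -
      have fy: "f y = (\<Sum>j\<in>F. f y * \<phi> j y)" by (simp add: sum_distrib_left[symmetric] phi_sum)
      have "f y - Pf y = (\<Sum>j\<in>F. \<phi> j y * (f y - f j))"
        unfolding Pf_def by (subst fy) (simp add: right_diff_distrib sum_subtractf sum_distrib_right[symmetric] phi_sum mult.commute)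
      also have "\<bar>\<dots>\<bar> \<le> (\<Sum>j\<in>F. \<bar>\<phi> j y * (f y - f j)\<bar>)" by (rule sum_abs)
      also have "\<dots> \<le> (\<Sum>j\<in>F. \<phi> j y * eta)"
      proof (intro sum_mono)
        fix j assume "j \<in> F"
        show "\<bar>\<phi> j y * (f y - f j)\<bar> \<le> \<phi> j y * eta"
        proof (cases "\<phi> j y = 0")
          case True then show ?thesis by simp
        next
          case False
          then have "\<bar>f y - f j\<bar> \<le> eta" using fu phi_supp by blast
          then show ?thesis using phi_nn[of j y] by (simp add: abs_mult mult_left_mono)
        qed
      qed
      also have "\<dots> = eta" by (simp add: sum_distrib_right[symmetric] phi_sum)
      finally show ?thesis .
    qed
    have BPf: "Bq_fun q \<tau> Pf i = (\<Sum>j\<in>F. f j * A i j)" for i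
    proof -
      have "Bq_fun q \<tau> Pf i = (\<Sum>j\<in>F. Bq_fun q \<tau> (\<lambda>y. f j * \<phi> j y) i)" unfolding Pf_def
        by (rule Bq_sum) (intro continuous_on_mult continuous_on_const phi_cont)
      also have "\<dots> = (\<Sum>j\<in>F. f j * A i j)" unfolding A_def by (simp add: Bq_scale)
      finally show ?thesis .
    qed
    have Bsplit: "Bq_fun q \<tau> f i = Bq_fun q \<tau> (\<lambda>y. f y - Pf y) i + (\<Sum>j\<in>F. f j * A i j)" for i
      using Bq_diff[OF f Pf_cont, of i] BPf[of i] by simp
    have E1b: "\<bar>Bq_fun q \<tau> (\<lambda>y. f y - Pf y) i\<bar> \<le> eta * Cq" for i
      by (rule Bq_bound) (use f Pf_cont err in \<open>auto intro: continuous_on_diff\<close>)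
    define E1 where "E1 = (\<Sum>i\<in>F. w i * Bq_fun q \<tau> (\<lambda>y. f y - Pf y) i)"
    define E2 where "E2 = (\<Sum>j\<in>F. f j * ((\<Sum>i\<in>F. w i * A i j) - lam * w j))"
    have decomp: "(\<Sum>i\<in>F. w i * Bq_fun q \<tau> f i) - lam * (\<Sum>i\<in>F. w i * f i) = E1 + E2"
    proof -
      have "(\<Sum>i\<in>F. w i * Bq_fun q \<tau> f i) = E1 + (\<Sum>i\<in>F. \<Sum>j\<in>F. w i * (f j * A i j))"
        unfolding E1_def Bsplit by (simp add: distrib_left sum.distrib sum_distrib_left)
      also have "(\<Sum>i\<in>F. \<Sum>j\<in>F. w i * (f j * A i j)) = (\<Sum>j\<in>F. f j * (\<Sum>i\<in>F. w i * A i j))"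
        by (subst sum.swap) (simp add: sum_distrib_left mult.left_commute)
      finally show ?thesis unfolding E2_def
        by (simp add: right_diff_distrib sum_subtractf sum_distrib_left mult.left_commute mult.commute)
    qed
    have "\<bar>E1\<bar> \<le> (\<Sum>i\<in>F. w i * (eta * Cq))" unfolding E1_def
      by (rule order_trans[OF sum_abs], intro sum_mono) (use wl(1) E1b in \<open>auto simp: abs_mult intro: mult_left_mono\<close>)
    also have "\<dots> = Cq * eta" using wl(2) by (simp add: sum_distrib_right[symmetric])
    finally have e1: "\<bar>E1\<bar> \<le> Cq * eta" .
    have "\<bar>E2\<bar> \<le> (\<Sum>j\<in>F. Mf * \<bar>(\<Sum>i\<in>F. w i * A i j) - lam * w j\<bar>)" unfolding E2_def
      by (rule order_trans[OF sum_abs], intro sum_mono) (use fb in \<open>auto simp: abs_mult intro: mult_right_mono\<close>)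
    also have "\<dots> \<le> Mf * ep" using wl(5) Mf0 by (simp add: sum_distrib_left[symmetric] mult_left_mono)
    finally have e2: "\<bar>E2\<bar> \<le> ep * Mf" by (simp add: mult.commute)
    show ?thesis unfolding decomp using e1 e2 abs_triangle_ineq[of E1 E2] by linarith
  qed
  show ?thesis using fin wl main by blast
qed

lemma integrable_nu: assumes "prob_space \<nu>" "sets \<nu> = sets (borel :: 'x measure)" "continuous_on UNIV (f :: 'x \<Rightarrow> real)"
  shows "integrable \<nu> f"
proof -
  interpret prob_space \<nu> by fact
  obtain B where B: "\<forall>x. \<bar>f x\<bar> \<le> B" using cont_bounded[OF assms(3) X_compact] by blast
  have "f \<in> borel_measurable \<nu>"
    using borel_measurable_continuous_onI[OF assms(3)] measurable_cong_sets[OF assms(2) refl] by blast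
  then show ?thesis by (intro integrable_const_bound[where B=B]) (use B in auto)
qed

lemma final_from_eigen:
  assumes nu: "prob_space \<nu>" "sets \<nu> = sets (borel :: 'x measure)"
    and eig: "\<And>f. continuous_on UNIV f \<Longrightarrow> (\<integral>x. Bq_fun q \<tau> f x \<partial>\<nu>) = \<rho> * (\<integral>x. f x \<partial>\<nu>)"
  shows "\<exists>\<rho>::real. 0 < \<rho> \<and> \<rho> \<le> spectral_radius (Bq_op q \<tau>) \<and>
           (\<exists>\<nu>::'x measure. prob_space \<nu> \<and> sets \<nu> = sets borel \<and>
               Lq_image q \<tau> \<nu> (scale_measure (ennreal \<rho>) \<nu>))"
proof -
  interpret P: prob_space \<nu> by fact
  have meas: "continuous_on UNIV f \<Longrightarrow> f \<in> borel_measurable \<nu>" for f :: "'x \<Rightarrow> real"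
    using borel_measurable_continuous_onI measurable_cong_sets[OF nu(2) refl] by blast
  have one: "(\<integral>x. Bq_fun q \<tau> (\<lambda>_. 1) x \<partial>\<nu>) = \<rho>" using eig[of "\<lambda>_. 1"] P.prob_space by simp
  have "cq \<le> (\<integral>x. Bq_fun q \<tau> (\<lambda>_. 1) x \<partial>\<nu>)"
  proof -
    have "(\<integral>x. cq \<partial>\<nu>) \<le> (\<integral>x. Bq_fun q \<tau> (\<lambda>_. 1) x \<partial>\<nu>)"
      by (intro integral_mono integrable_nu[OF nu] Bq_cont) (auto simp: Bq_one q_inf)
    then show ?thesis using P.prob_space by simp
  qed
  then have rho_pos: "\<rho> > 0" using one q_inf by simp
  have pow: "(\<integral>x. (Bq_fun q \<tau> ^^ n) (\<lambda>_. 1) x \<partial>\<nu>) = \<rho> ^ n" for n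
  proof (induction n)
    case 0 then show ?case using P.prob_space by simp
  next
    case (Suc n)
    have "(\<integral>x. (Bq_fun q \<tau> ^^ Suc n) (\<lambda>_. 1) x \<partial>\<nu>) = \<rho> * (\<integral>x. (Bq_fun q \<tau> ^^ n) (\<lambda>_. 1) x \<partial>\<nu>)"
      by (simp add: eig iter_cont)
    then show ?case using Suc by simp
  qed
  have le_norm: "\<rho> ^ n \<le> norm (blinfun_pow (Bq_op q \<tau>) n)" for n
  proof -
    have "\<rho> ^ n = (\<integral>x. (Bq_fun q \<tau> ^^ n) (\<lambda>_. 1) x \<partial>\<nu>)" by (rule pow[symmetric])
    also have "\<dots> \<le> (\<integral>x. norm (blinfun_pow (Bq_op q \<tau>) n) \<partial>\<nu>)"
      by (intro integral_mono integrable_nu[OF nu] iter_cont iter_le_norm) auto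
    also have "\<dots> = norm (blinfun_pow (Bq_op q \<tau>) n)" using P.prob_space by simp
    finally show ?thesis .
  qed
  have "\<rho> \<le> spectral_radius (Bq_op q \<tau>)"
    unfolding spectral_radius_def
  proof (rule cINF_greatest)
    show "{1::nat..} \<noteq> {}" by auto
    fix n :: nat assume "n \<in> {1..}"
    then have n: "n \<ge> 1" by simp
    have "\<rho> = (\<rho> ^ n) powr (1 / real n)"
      using rho_pos n by (simp add: powr_realpow[symmetric] powr_powr)
    also have "\<dots> \<le> norm (blinfun_pow (Bq_op q \<tau>) n) powr (1 / real n)"
      using rho_pos by (intro powr_mono2 le_norm) auto
    finally show "\<rho> \<le> norm (blinfun_pow (Bq_op q \<tau>) n) powr (1 / real n)" .
  qed
  moreover have "Lq_image q \<tau> \<nu> (scale_measure (ennreal \<rho>) \<nu>)"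
    unfolding Lq_image_def
  proof (intro conjI allI impI)
    show "sets (scale_measure (ennreal \<rho>) \<nu>) = sets borel" using nu(2) by simp
    fix f :: "'x \<Rightarrow> real" assume f: "continuous_on UNIV f"
    have "(\<integral>x. f x \<partial>scale_measure (ennreal \<rho>) \<nu>) = \<rho> * (\<integral>x. f x \<partial>\<nu>)"
      using rho_pos meas[OF f] by (intro integral_scale_ennreal) auto
    then show "(\<integral>x. f x \<partial>scale_measure (ennreal \<rho>) \<nu>) = (\<integral>x. Bq_fun q \<tau> f x \<partial>\<nu>)" using eig[OF f] by simp
  qed
  ultimately show ?thesis using rho_pos nu by blast
qed

lemma construct:
  "\<exists>\<nu> \<rho>. prob_space \<nu> \<and> sets \<nu> = sets (borel :: 'x measure) \<and>
     (\<forall>f. continuous_on UNIV f \<longrightarrow> (\<integral>x. Bq_fun q \<tau> f x \<partial>\<nu>) = \<rho> * (\<integral>x. f x \<partial>\<nu>))"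
proof -
  define P where "P k F w lam \<longleftrightarrow> finite F \<and> (\<forall>i\<in>F. 0 \<le> w i) \<and> (\<Sum>i\<in>F. w i) = 1 \<and> cq \<le> lam \<and> lam \<le> Cq \<and>
     (\<forall>f eta Mf. continuous_on UNIV f \<longrightarrow> (\<forall>x y. dist x y < 1 / (real k + 1) \<longrightarrow> \<bar>f x - f y\<bar> \<le> eta) \<longrightarrow>
        (\<forall>x. \<bar>f x\<bar> \<le> Mf) \<longrightarrow>
        \<bar>(\<Sum>i\<in>F. w i * Bq_fun q \<tau> f i) - lam * (\<Sum>i\<in>F. w i * f i)\<bar> \<le> Cq * eta + 1 / (real k + 1) * Mf)"
    for k and F :: "'x set" and w lam
  have ex: "\<forall>k. \<exists>F w lam. P k F w lam"
  proof
    fix k :: nat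
    have "1 / (real k + 1) > 0" by simp
    from level[OF this this] show "\<exists>F w lam. P k F w lam" unfolding P_def by blast
  qed
  obtain Fk where h1: "\<forall>k. \<exists>w lam. P k (Fk k) w lam" using choice[OF ex] by blast
  obtain wk where h2: "\<forall>k. \<exists>lam. P k (Fk k) (wk k) lam" using choice[OF h1] by blast
  obtain lamk where h3: "\<forall>k. P k (Fk k) (wk k) (lamk k)" using choice[OF h2] by blast
  have fin: "finite (Fk k)" and wnn: "\<And>i. i \<in> Fk k \<Longrightarrow> 0 \<le> wk k i" and wsum: "(\<Sum>i\<in>Fk k. wk k i) = 1"
    and lam_lo: "cq \<le> lamk k" and lam_hi: "lamk k \<le> Cq" for k
    using h3 unfolding P_def by blast+
  have approx: "\<And>f eta Mf. continuous_on UNIV f \<Longrightarrow> (\<forall>x y. dist x y < 1 / (real k + 1) \<longrightarrow> \<bar>f x - f y\<bar> \<le> eta) \<Longrightarrow>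
        (\<forall>x. \<bar>f x\<bar> \<le> Mf) \<Longrightarrow>
        \<bar>(\<Sum>i\<in>Fk k. wk k i * Bq_fun q \<tau> f i) - lamk k * (\<Sum>i\<in>Fk k. wk k i * f i)\<bar> \<le> Cq * eta + 1 / (real k + 1) * Mf" for k
    using h3 unfolding P_def by blast
  obtain K and \<psi> :: "real \<Rightarrow> 'x" where K: "compact K" "K \<subseteq> {0..2}" "continuous_on K \<psi>" "\<forall>x. \<exists>t\<in>K. \<psi> t = x"
    using coding[OF X_compact] by blast
  have Kclosed: "closed K" using K(1) by (rule compact_imp_closed)
  define lift where "lift x = (SOME t. t \<in> K \<and> \<psi> t = x)" for x
  have lift: "lift x \<in> K \<and> \<psi> (lift x) = x" for x
    unfolding lift_def by (rule someI_ex) (use K(4) in blast)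
  define wf where "wf k x = (if x \<in> Fk k then wk k x else 0)" for k x
  have wf_nn: "\<And>x. 0 \<le> wf k x" for k unfolding wf_def using wnn by simp
  have wf_prob: "(\<integral>\<^sup>+x. ennreal (wf k x) \<partial>count_space UNIV) = 1" for k
  proof -
    have "(\<integral>\<^sup>+x. ennreal (wf k x) \<partial>count_space UNIV) = (\<integral>\<^sup>+x. ennreal (wk k x) * indicator (Fk k) x \<partial>count_space UNIV)"
      unfolding wf_def by (intro nn_integral_cong) (simp split: split_indicator)
    also have "\<dots> = (\<integral>\<^sup>+x. ennreal (wk k x) \<partial>count_space (Fk k))"
      by (rule nn_integral_count_space_indicator[symmetric]) simp
    also have "\<dots> = (\<Sum>x\<in>Fk k. ennreal (wk k x))" by (rule nn_integral_count_space_finite[OF fin])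
    also have "\<dots> = ennreal (\<Sum>x\<in>Fk k. wk k x)" using wnn by (simp add: sum_ennreal)
    finally show ?thesis using wsum by simp
  qed
  define pk where "pk k = embed_pmf (wf k)" for k
  have pmf_pk: "pmf (pk k) x = wf k x" for k x
    unfolding pk_def by (rule pmf_embed_pmf[OF wf_nn wf_prob])
  have int_pk: "(\<integral>x. h x \<partial>measure_pmf (pk k)) = (\<Sum>x\<in>Fk k. wk k x * h x)" for k and h :: "'x \<Rightarrow> real"
  proof -
    have "(\<integral>x. h x \<partial>measure_pmf (pk k)) = (\<Sum>a\<in>Fk k. h a * pmf (pk k) a)"
      by (rule integral_measure_pmf_real[OF fin]) (auto simp: set_pmf_iff pmf_pk wf_def split: if_splits)
    then show ?thesis by (simp add: pmf_pk wf_def mult.commute)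
  qed
  define \<eta> where "\<eta> k = distr (measure_pmf (pk k)) borel lift" for k
  have lift_meas: "lift \<in> measurable (measure_pmf (pk k)) borel" for k by simp
  have rd: "real_distribution (\<eta> k)" for k
    unfolding real_distribution_def real_distribution_axioms_def \<eta>_def
    by (auto intro: prob_space.prob_space_distr measure_pmf.prob_space_axioms)
  have int_eta: "h \<in> borel_measurable borel \<Longrightarrow> (\<integral>t. h t \<partial>\<eta> k) = (\<Sum>x\<in>Fk k. wk k x * h (lift x))" for k h
    unfolding \<eta>_def by (simp add: integral_distr int_pk)
  have tight: "tight \<eta>"
    unfolding tight_def
  proof (intro conjI allI impI)
    fix n show "real_distribution (\<eta> n)" by (rule rd)
  next
    fix e :: real assume e: "e > 0"
    have "measure (\<eta> n) {-1<..3} = 1" for n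
    proof -
      have "lift x \<in> {-1<..3}" for x using lift[of x] K(2) by fastforce
      then have "lift -` {-1<..3} \<inter> space (measure_pmf (pk n)) = UNIV" by auto
      then show ?thesis unfolding \<eta>_def by (simp add: measure_distr measure_pmf.prob_space)
    qed
    then show "\<exists>a b. a < b \<and> (\<forall>n. 1 - e < measure (\<eta> n) {a<..b})" using e
      by (intro exI[of _ "-1"] exI[of _ 3]) auto
  qed
  have lam_in: "\<forall>n. lamk n \<in> {cq..Cq}" using lam_lo lam_hi by auto
  obtain l s where ls: "l \<in> {cq..Cq}" "strict_mono s" "(lamk \<circ> s) \<longlonglongrightarrow> l"
    using seq_compactE[OF compact_imp_seq_compact[OF compact_Icc] lam_in] by blast
  obtain r M where rM: "strict_mono r" "real_distribution M" "weak_conv_m (\<eta> \<circ> s \<circ> r) M"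
    using tight_imp_convergent_subsubsequence[OF tight ls(2)] by blast
  define \<sigma> where "\<sigma> = s \<circ> r"
  have \<sigma>: "strict_mono \<sigma>" unfolding \<sigma>_def by (rule strict_mono_o[OF ls(2) rM(1)])
  have lam\<sigma>: "(\<lambda>n. lamk (\<sigma> n)) \<longlonglongrightarrow> l"
    using LIMSEQ_subseq_LIMSEQ[OF ls(3) rM(1)] unfolding \<sigma>_def by (simp add: o_def)
  have wc: "weak_conv_m (\<eta> \<circ> \<sigma>) M" using rM(3) unfolding \<sigma>_def by (simp add: o_assoc)
  have WC: "(\<lambda>n. \<integral>t. G t \<partial>\<eta> (\<sigma> n)) \<longlonglongrightarrow> (\<integral>t. G t \<partial>M)"
    if "\<And>x. isCont G x" "\<And>x. norm (G x) \<le> B" for G :: "real \<Rightarrow> real" and B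
    using weak_conv_imp_integral_bdd_continuous_conv[of "\<eta> \<circ> \<sigma>" M G B] rd rM(2) wc that by (simp add: o_def)
  interpret Mp: real_distribution M by (rule rM(2))
  have Kne: "K \<noteq> {}" using lift by blast
  have AE_K: "AE t in M. t \<in> K"
  proof -
    define h where "h t = min 1 (infdist t K)" for t
    have hc: "continuous_on UNIV h" unfolding h_def[abs_def] by (intro continuous_intros)
    have hic: "isCont h x" for x using hc by (simp add: continuous_on_eq_continuous_at)
    have hb: "norm (h x) \<le> 1" for x unfolding h_def using infdist_nonneg[of x K] by simp
    have hm: "h \<in> borel_measurable borel" by (rule borel_measurable_continuous_onI[OF hc])
    have "(\<lambda>n. \<integral>t. h t \<partial>\<eta> (\<sigma> n)) \<longlonglongrightarrow> (\<integral>t. h t \<partial>M)" by (rule WC[OF hic hb])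
    moreover have "(\<integral>t. h t \<partial>\<eta> (\<sigma> n)) = 0" for n
      using int_eta[OF hm] lift by (simp add: h_def)
    ultimately have "(\<integral>t. h t \<partial>M) = 0" by (simp add: LIMSEQ_const_iff)
    moreover have "integrable M h"
      by (rule Mp.integrable_const_bound[where B=1]) (use hb hm in auto)
    moreover have "AE t in M. 0 \<le> h t" unfolding h_def by (intro AE_I2) (simp add: infdist_nonneg)
    ultimately have "AE t in M. h t = 0" using integral_nonneg_eq_0_iff_AE by blast
    then show ?thesis
    proof (rule AE_mp, intro AE_I2 impI)
      fix t assume "h t = 0"
      then have "infdist t K = 0" unfolding h_def by (simp add: min_def split: if_splits)
      then have "t \<in> closure K" using in_closure_iff_infdist_zero[OF Kne] by simp
      then show "t \<in> K" using Kclosed by (simp add: closure_closed)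
    qed
  qed
  define \<psi>' where "\<psi>' t = (if t \<in> K then \<psi> t else undefined)" for t
  have \<psi>'_bor: "\<psi>' \<in> borel_measurable borel" unfolding \<psi>'_def[abs_def]
    by (rule borel_measurable_continuous_on_if) (use Kclosed K(3) in auto)
  have \<psi>'_meas: "\<psi>' \<in> measurable M borel"
    using \<psi>'_bor measurable_cong_sets[OF Mp.events_eq_borel refl] by blast
  define \<nu> where "\<nu> = distr M borel \<psi>'"
  have nu_prob: "prob_space \<nu>" unfolding \<nu>_def by (rule Mp.prob_space_distr[OF \<psi>'_meas])
  have nu_sets: "sets \<nu> = sets (borel :: 'x measure)" unfolding \<nu>_def by simp
  have conv: "(\<lambda>n. \<Sum>x\<in>Fk (\<sigma> n). wk (\<sigma> n) x * g x) \<longlonglongrightarrow> (\<integral>x. g x \<partial>\<nu>)"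
    if g: "continuous_on UNIV g" for g :: "'x \<Rightarrow> real"
  proof -
    obtain B where B: "\<forall>x. \<bar>g x\<bar> \<le> B" using cont_bounded[OF g X_compact] by blast
    have B0: "0 \<le> B" using B by (meson abs_ge_zero order_trans)
    have gpc: "continuous_on K (g \<circ> \<psi>)"
      by (rule continuous_on_compose[OF K(3)]) (rule continuous_on_subset[OF g], simp)
    have cK: "closedin (top_of_set UNIV) K" using Kclosed by (simp add: closedin_closed)
    obtain G where G: "continuous_on UNIV G" "\<And>x. x \<in> K \<Longrightarrow> G x = (g \<circ> \<psi>) x" "\<And>x. x \<in> UNIV \<Longrightarrow> norm (G x) \<le> B"
      using Tietze[OF gpc cK B0] B by auto
    have Gic: "isCont G x" for x using G(1) by (simp add: continuous_on_eq_continuous_at)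
    have Gm: "G \<in> borel_measurable borel" by (rule borel_measurable_continuous_onI[OF G(1)])
    have gm: "g \<in> borel_measurable borel" by (rule borel_measurable_continuous_onI[OF g])
    have "(\<lambda>n. \<integral>t. G t \<partial>\<eta> (\<sigma> n)) \<longlonglongrightarrow> (\<integral>t. G t \<partial>M)" by (rule WC[OF Gic G(3)]) simp
    moreover have "(\<integral>t. G t \<partial>\<eta> (\<sigma> n)) = (\<Sum>x\<in>Fk (\<sigma> n). wk (\<sigma> n) x * g x)" for n
      using int_eta[OF Gm] G(2) lift by simp
    moreover have "(\<integral>x. g x \<partial>\<nu>) = (\<integral>t. G t \<partial>M)"
    proof -
      have "(\<integral>x. g x \<partial>\<nu>) = (\<integral>t. g (\<psi>' t) \<partial>M)" unfolding \<nu>_def by (rule integral_distr[OF \<psi>'_meas gm])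
      also have "\<dots> = (\<integral>t. G t \<partial>M)"
      proof (rule integral_cong_AE)
        show "(\<lambda>t. g (\<psi>' t)) \<in> borel_measurable M" using gm \<psi>'_meas by measurable
        show "G \<in> borel_measurable M" using Gm measurable_cong_sets[OF Mp.events_eq_borel refl] by blast
        show "AE t in M. g (\<psi>' t) = G t" using AE_K by eventually_elim (simp add: \<psi>'_def G(2))
      qed
      finally show ?thesis .
    qed
    ultimately show ?thesis by simp
  qed
  have eig: "(\<integral>x. Bq_fun q \<tau> f x \<partial>\<nu>) = l * (\<integral>x. f x \<partial>\<nu>)" if f: "continuous_on UNIV f" for f
  proof -
    define d where "d n = (\<Sum>x\<in>Fk (\<sigma> n). wk (\<sigma> n) x * Bq_fun q \<tau> f x) - lamk (\<sigma> n) * (\<Sum>x\<in>Fk (\<sigma> n). wk (\<sigma> n) x * f x)" for n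
    have "d \<longlonglongrightarrow> (\<integral>x. Bq_fun q \<tau> f x \<partial>\<nu>) - l * (\<integral>x. f x \<partial>\<nu>)"
      unfolding d_def by (intro tendsto_intros conv Bq_cont f lam\<sigma>)
    moreover have "d \<longlonglongrightarrow> 0"
    proof (rule LIMSEQ_I)
      fix e :: real assume e: "e > 0"
      obtain B where B: "\<forall>x. \<bar>f x\<bar> \<le> B" using cont_bounded[OF f X_compact] by blast
      have B0: "0 \<le> B" using B by (meson abs_ge_zero order_trans)
      have Cq0: "Cq > 0" by (rule Cq_pos)
      define e1 where "e1 = e / (2 * (Cq + 1))"
      have e1: "e1 > 0" unfolding e1_def using e Cq0 by simp
      have "uniformly_continuous_on UNIV f" using compact_uniformly_continuous[OF f X_compact] .
      then obtain dl where dl: "dl > 0" "\<And>x y. dist x y < dl \<Longrightarrow> dist (f x) (f y) < e1"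
        unfolding uniformly_continuous_on_def using e1 by (metis UNIV_I)
      define e2 where "e2 = min dl (e / (2 * (B + 1)))"
      have e2: "e2 > 0" unfolding e2_def using dl e B0 by simp
      obtain N where N: "inverse (real (Suc N)) < e2" using reals_Archimedean[OF e2] by blast
      show "\<exists>no. \<forall>n\<ge>no. norm (d n - 0) < e"
      proof (intro exI allI impI)
        fix n assume n: "n \<ge> N"
        have sn: "\<sigma> n \<ge> N" using seq_suble[OF \<sigma>, of n] n by simp
        have "1 / (real (\<sigma> n) + 1) \<le> inverse (real (Suc N))" using sn by (simp add: field_simps)
        then have small: "1 / (real (\<sigma> n) + 1) < e2" using N by simp
        have uc: "\<forall>x y. dist x y < 1 / (real (\<sigma> n) + 1) \<longrightarrow> \<bar>f x - f y\<bar> \<le> e1"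
        proof (intro allI impI)
          fix x y :: 'x assume "dist x y < 1 / (real (\<sigma> n) + 1)"
          then have "dist x y < dl" using small unfolding e2_def by simp
          then show "\<bar>f x - f y\<bar> \<le> e1" using dl(2) by (simp add: dist_real_def less_imp_le)
        qed
        have "\<bar>d n\<bar> \<le> Cq * e1 + 1 / (real (\<sigma> n) + 1) * B"
          unfolding d_def by (rule approx[OF f uc B])
        also have "Cq * e1 < e / 2" unfolding e1_def using e Cq0 by (simp add: field_simps)
        also have "1 / (real (\<sigma> n) + 1) * B \<le> e / (2 * (B + 1)) * B"
          using small B0 unfolding e2_def by (intro mult_right_mono) auto
        also have "e / (2 * (B + 1)) * B < e / 2" using e B0 by (simp add: field_simps)
        finally show "norm (d n - 0) < e" by simp
      qed
    qed
    ultimately have "(\<integral>x. Bq_fun q \<tau> f x \<partial>\<nu>) - l * (\<integral>x. f x \<partial>\<nu>) = 0" using LIMSEQ_unique by blast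
    then show ?thesis by simp
  qed
  show ?thesis using nu_prob nu_sets eig by blast
qed

end


theorem mainTheorem3:
  fixes \<tau> :: "'t::metric_space \<Rightarrow> 'x::metric_space \<Rightarrow> 'x"
    and q :: "'x \<Rightarrow> 't measure"
  assumes X_compact: "compact (UNIV :: 'x set)"
    and Theta_compact: "compact (UNIV :: 't set)"
    and tau_cont: "continuous_on UNIV (\<lambda>(\<theta>, x). \<tau> \<theta> x)"
    and q_borel: "\<forall>x. sets (q x) = sets (borel :: 't measure)"
    and q_finite: "\<forall>x. finite_measure (q x)"
    and q_sup: "\<exists>C::real. \<forall>x. measure (q x) UNIV \<le> C"
    and q_inf: "\<exists>c::real. c > 0 \<and> (\<forall>x. c \<le> measure (q x) UNIV)"
    and q_meas: "\<forall>A \<in> sets (borel :: 't measure). (\<lambda>x. emeasure (q x) A) \<in> borel_measurable borel"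
    and q_weak_cont: "\<forall>f::'t \<Rightarrow> real. continuous_on UNIV f \<longrightarrow>
                        continuous_on UNIV (\<lambda>x. \<integral>\<theta>. f \<theta> \<partial>(q x))"
  shows "\<exists>\<rho>::real. 0 < \<rho> \<and> \<rho> \<le> spectral_radius (Bq_op q \<tau>) \<and>
           (\<exists>\<nu>::'x measure. prob_space \<nu> \<and> sets \<nu> = sets borel \<and>
               Lq_image q \<tau> \<nu> (scale_measure (ennreal \<rho>) \<nu>))"
proof -
  obtain C :: real where C: "\<forall>x. measure (q x) UNIV \<le> C" using q_sup by blast
  obtain c :: real where c: "c > 0" "\<forall>x. c \<le> measure (q x) UNIV" using q_inf by blast
  obtain \<nu> \<rho> where nu: "prob_space \<nu>" "sets \<nu> = sets (borel :: 'x measure)"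
    "\<forall>f. continuous_on UNIV f \<longrightarrow> (\<integral>x. Bq_fun q \<tau> f x \<partial>\<nu>) = \<rho> * (\<integral>x. f x \<partial>\<nu>)"
    using construct[OF X_compact Theta_compact tau_cont q_borel q_finite C c q_weak_cont] by blast
  show ?thesis
    by (rule final_from_eigen[OF X_compact Theta_compact tau_cont q_borel q_finite C c q_weak_cont nu(1,2)])
       (use nu(3) in blast)
qed

end
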